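(* Let $T$ be a tree and $v\in V(T)$. Root $T$ at $v$ and let $\bar T_v$ be a pruning of this rooted tree. Then (a) $v\in\mathcal{A}(T)$ if and only if $|C^2_{\bar T_v}(v)|=0$ and $|C^1_{\bar T_v}(v)|\le 1$; (b) $v\in\mathcal{N}(T)$ if and only if $|C^2_{\bar T_v}(v)|=2$ or $|C^1_{\bar T_v}(v)|+|C^2_{\bar T_v}(v)|\ge 3$.
   Context: All graphs are finite, simple and undirected. A dissociation set of a graph $G$ is a set $F\subseteq V(G)$ such that $G[F]$ has maximum degree at most $1$; a maximum dissociation set is one of maximum cardinality. $\mathcal{A}(G)$ is the set of vertices contained in every maximum dissociation set of $G$; $\mathcal{N}(G)$ is the set of vertices contained in no maximum dissociation set of $G$. In a rooted tree, for a vertex $u$, $C(u)$ is the set of children of $u$, $D[u]$ is the set consisting of $u$ and all its descendants, and $T_u$ is the subtree induced by $D[u]$. A branch vertex is a vertex of degree at least $3$. Pruning: let $T$ be rooted at $v$. While the current tree has a branch vertex different from $v$, choose such a branch vertex $u\ne v$ at maximum distance from $v$; then every proper descendant of $u$ has degree at most $2$, so for each child $w$ of $u$ the subtree $T_w$ is a path with end vertex $w$, and for $i\in\{0,1,2\}$ let $C^i(u)$ be the set of children $w$ of $u$ with $|V(T_w)|\equiv i \pmod 3$. If $|C^2(u)|\ge 1$ or $|C^1(u)|\ge 2$, delete all vertices of $D[u]$; if $|C^2(u)|=0$ and $|C^1(u)|\le 1$, delete all vertices of $D[w]$ for every $w\in C(u)\setminus\{z\}$, where $z$ is the unique vertex of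 $C^1(u)$ if $|C^1(u)|=1$ and an arbitrary child of $u$ otherwise. When no branch vertex other than $v$ remains, the resulting tree is called a pruning of $T$. In the pruning $\bar T_v$, every vertex other than $v$ has degree at most $2$, so for each child $w$ of $v$ in $\bar T_v$ the subtree of $\bar T_v$ induced by $w$ and its descendants is a path with end vertex $w$; for $i\in\{0,1,2\}$, $C^i_{\bar T_v}(v)$ is the set of children $w$ of $v$ in $\bar T_v$ for which this path has a number of vertices congruent to $i$ modulo $3$. *)

theory Defs
  imports Main
begin

text \<open>A subtree occurring during pruning is
  represented by its vertex set S; the current tree is the induced subgraph on S.\<close>

definition simple_graph :: "'a set \<Rightarrow> ('a \<Rightarrow> 'a \<Rightarrow> bool) \<Rightarrow> bool" where
  "simple_graph V E \<longleftrightarrow> finite V \<and> (\<forall>x y. E x y \<longrightarrow> x \<in> V \<and> y \<in> V)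
     \<and> (\<forall>x y. E x y \<longrightarrow> E y x) \<and> (\<forall>x. \<not> E x x)"

definition is_path :: "'a set \<Rightarrow> ('a \<Rightarrow> 'a \<Rightarrow> bool) \<Rightarrow> 'a list \<Rightarrow> bool" where
  "is_path S E xs \<longleftrightarrow> xs \<noteq> [] \<and> distinct xs \<and> set xs \<subseteq> S
     \<and> (\<forall>i. Suc i < length xs \<longrightarrow> E (xs ! i) (xs ! Suc i))"

definition is_cycle :: "'a set \<Rightarrow> ('a \<Rightarrow> 'a \<Rightarrow> bool) \<Rightarrow> 'a list \<Rightarrow> bool" where
  "is_cycle S E xs \<longleftrightarrow> length xs \<ge> 3 \<and> is_path S E xs \<and> E (last xs) (hd xs)"

definition connected_graph :: "'a set \<Rightarrow> ('a \<Rightarrow> 'a \<Rightarrow> bool) \<Rightarrow> bool" where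
  "connected_graph V E \<longleftrightarrow>
     (\<forall>x\<in>V. \<forall>y\<in>V. \<exists>xs. is_path V E xs \<and> hd xs = x \<and> last xs = y)"

definition is_tree :: "'a set \<Rightarrow> ('a \<Rightarrow> 'a \<Rightarrow> bool) \<Rightarrow> bool" where
  "is_tree V E \<longleftrightarrow> simple_graph V E \<and> V \<noteq> {} \<and> connected_graph V E
     \<and> \<not> (\<exists>xs. is_cycle V E xs)"

definition dissociation_set :: "'a set \<Rightarrow> ('a \<Rightarrow> 'a \<Rightarrow> bool) \<Rightarrow> 'a set \<Rightarrow> bool" where
  "dissociation_set V E F \<longleftrightarrow> F \<subseteq> V \<and> (\<forall>x\<in>F. card {y\<in>F. E x y} \<le> 1)"

definition max_dissociation_set :: "'a set \<Rightarrow> ('a \<Rightarrow> 'a \<Rightarrow> bool) \<Rightarrow> 'a set \<Rightarrow> bool" where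
  "max_dissociation_set V E F \<longleftrightarrow> dissociation_set V E F
     \<and> (\<forall>F'. dissociation_set V E F' \<longrightarrow> card F' \<le> card F)"

definition A_set :: "'a set \<Rightarrow> ('a \<Rightarrow> 'a \<Rightarrow> bool) \<Rightarrow> 'a set" where
  "A_set V E = {x\<in>V. \<forall>F. max_dissociation_set V E F \<longrightarrow> x \<in> F}"

definition N_set :: "'a set \<Rightarrow> ('a \<Rightarrow> 'a \<Rightarrow> bool) \<Rightarrow> 'a set" where
  "N_set V E = {x\<in>V. \<forall>F. max_dissociation_set V E F \<longrightarrow> x \<notin> F}"

definition deg :: "'a set \<Rightarrow> ('a \<Rightarrow> 'a \<Rightarrow> bool) \<Rightarrow> 'a \<Rightarrow> nat" where
  "deg S E x = card {y\<in>S. E x y}"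

definition dist :: "'a set \<Rightarrow> ('a \<Rightarrow> 'a \<Rightarrow> bool) \<Rightarrow> 'a \<Rightarrow> 'a \<Rightarrow> nat" where
  "dist S E x y = (LEAST n. \<exists>xs. is_path S E xs \<and> hd xs = x \<and> last xs = y \<and> length xs = Suc n)"

definition desc :: "'a set \<Rightarrow> ('a \<Rightarrow> 'a \<Rightarrow> bool) \<Rightarrow> 'a \<Rightarrow> 'a \<Rightarrow> 'a set" where
  "desc S E v u = {w\<in>S. \<exists>xs. is_path S E xs \<and> hd xs = v \<and> last xs = w \<and> u \<in> set xs}"

definition children :: "'a set \<Rightarrow> ('a \<Rightarrow> 'a \<Rightarrow> bool) \<Rightarrow> 'a \<Rightarrow> 'a \<Rightarrow> 'a set" where
  "children S E v u = {w\<in>S. E u w \<and> dist S E v w = Suc (dist S E v u)}"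

text \<open>C^i(u): children w of u with |V(T_w)| = i mod 3.\<close>
definition children_mod :: "'a set \<Rightarrow> ('a \<Rightarrow> 'a \<Rightarrow> bool) \<Rightarrow> 'a \<Rightarrow> nat \<Rightarrow> 'a \<Rightarrow> 'a set" where
  "children_mod S E v i u = {w\<in>children S E v u. card (desc S E v w) mod 3 = i}"

definition prune_step :: "('a \<Rightarrow> 'a \<Rightarrow> bool) \<Rightarrow> 'a \<Rightarrow> 'a set \<Rightarrow> 'a set \<Rightarrow> bool" where
  "prune_step E v S S' \<longleftrightarrow> (\<exists>u\<in>S. u \<noteq> v \<and> deg S E u \<ge> 3
     \<and> (\<forall>u'\<in>S. u' \<noteq> v \<and> deg S E u' \<ge> 3 \<longrightarrow> dist S E v u' \<le> dist S E v u)
     \<and> (if card (children_mod S E v 2 u) \<ge> 1 \<or> card (children_mod S E v 1 u) \<ge> 2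
        then S' = S - desc S E v u
        else (\<exists>z\<in>children S E v u. (children_mod S E v 1 u \<noteq> {} \<longrightarrow> z \<in> children_mod S E v 1 u)
               \<and> S' = S - \<Union> (desc S E v ` (children S E v u - {z})))))"

definition is_pruning :: "'a set \<Rightarrow> ('a \<Rightarrow> 'a \<Rightarrow> bool) \<Rightarrow> 'a \<Rightarrow> 'a set \<Rightarrow> bool" where
  "is_pruning V E v S \<longleftrightarrow> (prune_step E v)\<^sup>*\<^sup>* V S
     \<and> \<not> (\<exists>u\<in>S. u \<noteq> v \<and> deg S E u \<ge> 3)"

end

theory Submission
  imports Defs
begin


lemma is_path_Cons:
  "is_path S E (x # xs) \<longleftrightarrow> x \<in> S \<and> x \<notin> set xs \<and> (xs = [] \<or> (is_path S E xs \<and> E x (hd xs)))"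
proof -
  have "(\<forall>i. Suc i < length (x#xs) \<longrightarrow> E ((x#xs) ! i) ((x#xs) ! Suc i)) \<longleftrightarrow>
        (xs \<noteq> [] \<longrightarrow> E x (hd xs)) \<and> (\<forall>i. Suc i < length xs \<longrightarrow> E (xs ! i) (xs ! Suc i))"
  proof
    assume H: "\<forall>i. Suc i < length (x#xs) \<longrightarrow> E ((x#xs) ! i) ((x#xs) ! Suc i)"
    show "(xs \<noteq> [] \<longrightarrow> E x (hd xs)) \<and> (\<forall>i. Suc i < length xs \<longrightarrow> E (xs ! i) (xs ! Suc i))"
    proof
      show "xs \<noteq> [] \<longrightarrow> E x (hd xs)" using H[rule_format, of 0] by (cases xs) auto
      show "\<forall>i. Suc i < length xs \<longrightarrow> E (xs ! i) (xs ! Suc i)" using H[rule_format, of "Suc _"] by auto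
    qed
  next
    assume H: "(xs \<noteq> [] \<longrightarrow> E x (hd xs)) \<and> (\<forall>i. Suc i < length xs \<longrightarrow> E (xs ! i) (xs ! Suc i))"
    show "\<forall>i. Suc i < length (x#xs) \<longrightarrow> E ((x#xs) ! i) ((x#xs) ! Suc i)"
    proof (intro allI impI)
      fix i assume "Suc i < length (x#xs)"
      then show "E ((x#xs) ! i) ((x#xs) ! Suc i)" using H
        by (cases i) (auto simp: hd_conv_nth)
    qed
  qed
  then show ?thesis unfolding is_path_def by auto
qed

lemma is_path_single[simp]: "is_path S E [x] \<longleftrightarrow> x \<in> S"
  by (simp add: is_path_Cons)

lemma is_path_append:
  assumes "xs \<noteq> []" "ys \<noteq> []"
  shows "is_path S E (xs @ ys) \<longleftrightarrow> is_path S E xs \<and> is_path S E ys \<and> set xs \<inter> set ys = {} \<and> E (last xs) (hd ys)"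
  using assms(1)
proof (induction xs)
  case Nil then show ?case by simp
next
  case (Cons x xs)
  show ?case
  proof (cases "xs = []")
    case True then show ?thesis using assms(2) by (auto simp: is_path_Cons)
  next
    case False
    then show ?thesis using Cons.IH by (auto simp: is_path_Cons)
  qed
qed

lemma is_path_mono: "is_path S E xs \<Longrightarrow> S \<subseteq> T \<Longrightarrow> is_path T E xs"
  unfolding is_path_def by auto

lemma is_path_snoc:
  "xs \<noteq> [] \<Longrightarrow> is_path S E (xs @ [y]) \<longleftrightarrow> is_path S E xs \<and> y \<in> S \<and> y \<notin> set xs \<and> E (last xs) y"
  by (subst is_path_append) auto



lemma distinct_hd_last: "distinct xs \<Longrightarrow> xs \<noteq> [] \<Longrightarrow> hd xs = last xs \<Longrightarrow> xs = [hd xs]"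
  by (cases xs) (auto split: if_splits)

locale rtree =
  fixes V :: "'a set" and E :: "'a \<Rightarrow> 'a \<Rightarrow> bool" and v :: 'a
  assumes tree: "is_tree V E" and root: "v \<in> V"
begin

lemma finV: "finite V" using tree unfolding is_tree_def simple_graph_def by auto
lemma symE: "E x y \<Longrightarrow> E y x" using tree unfolding is_tree_def simple_graph_def by auto
lemma irrE: "\<not> E x x" using tree unfolding is_tree_def simple_graph_def by auto
lemma EV: "E x y \<Longrightarrow> x \<in> V \<and> y \<in> V" using tree unfolding is_tree_def simple_graph_def by auto
lemma nocycle: "\<not> is_cycle V E xs" using tree unfolding is_tree_def by auto
lemma conn: "x \<in> V \<Longrightarrow> y \<in> V \<Longrightarrow> \<exists>xs. is_path V E xs \<and> hd xs = x \<and> last xs = y"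
  using tree unfolding is_tree_def connected_graph_def by auto

lemma path_unique:
  assumes "is_path V E ys" "is_path V E xs" "hd xs = hd ys" "last xs = last ys"
  shows "xs = ys"
  using assms
proof (induction ys arbitrary: xs rule: rev_induct)
  case Nil then show ?case by (simp add: is_path_def)
next
  case (snoc y ys0)
  show ?case
  proof (cases "ys0 = []")
    case True
    then have "hd xs = last xs" using snoc.prems by simp
    then have "xs = [hd xs]" using distinct_hd_last snoc.prems(2) unfolding is_path_def by blast
    then show ?thesis using True snoc.prems by (metis list.sel(1) append_Nil)
  next
    case False
    define y' where "y' = last ys0"
    have p0: "is_path V E ys0" and yn: "y \<notin> set ys0" and Ey: "E y' y"
      using snoc.prems(1) False is_path_snoc[of ys0 V E y] unfolding y'_def by auto
    have xsne: "xs \<noteq> []" using snoc.prems(2) unfolding is_path_def by auto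
    have lastxs: "last xs = y" using snoc.prems by simp
    have hdxs: "hd xs = hd ys0" using snoc.prems False by simp
    show ?thesis
    proof (cases "y' \<in> set xs")
      case True
      then obtain xs1 xs2 where xs: "xs = xs1 @ y' # xs2" by (meson split_list)
      have pxs: "is_path V E ((xs1 @ [y']) @ xs2)" if "xs2 \<noteq> []" using snoc.prems(2) xs by simp
      have p1: "is_path V E (xs1 @ [y'])"
      proof (cases "xs2 = []")
        case True then show ?thesis using snoc.prems(2) xs by simp
      next
        case False then show ?thesis using pxs is_path_append[of "xs1 @ [y']" xs2] by auto
      qed
      have "hd (xs1 @ [y']) = hd ys0" using hdxs xs by (cases xs1) auto
      moreover have "last (xs1 @ [y']) = last ys0" by (simp add: y'_def)
      ultimately have eq: "xs1 @ [y'] = ys0" using snoc.IH[OF p0 p1] by simp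
      have y'in: "y' \<in> set ys0" using False y'_def by simp
      have x2ne: "xs2 \<noteq> []" using lastxs xs yn y'in by auto
      show ?thesis
      proof (cases "xs2 = [y]")
        case True then show ?thesis using xs eq by simp
      next
        case False
        have "last xs2 = y" using lastxs xs x2ne by simp
        then have len: "length xs2 \<ge> 2" using False x2ne by (cases xs2) (auto split: if_splits simp: Suc_le_eq)
        have y'V: "y' \<in> V" using snoc.prems(2) xs unfolding is_path_def by auto
        have pc: "is_path V E (y' # xs2)"
          using y'V pxs[OF x2ne] is_path_append[of "xs1 @ [y']" xs2] x2ne
          by (simp add: is_path_Cons)
        have "is_cycle V E (y' # xs2)"
          unfolding is_cycle_def using pc len \<open>last xs2 = y\<close> x2ne symE[OF Ey] by auto
        then show ?thesis using nocycle by blast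
      qed
    next
      case False
      have y'V: "y' \<in> V" using p0 False unfolding y'_def is_path_def
        by (metis \<open>ys0 \<noteq> []\<close> last_in_set subsetD)
      have "is_path V E (xs @ [y'])"
        using snoc.prems(2) xsne False lastxs symE[OF Ey] y'V is_path_snoc[of xs V E y']
        by auto
      moreover have "hd (xs @ [y']) = hd ys0" using hdxs xsne by simp
      moreover have "last (xs @ [y']) = last ys0" by (simp add: y'_def)
      ultimately have "xs @ [y'] = ys0" using snoc.IH[OF p0] by blast
      then have "set xs \<subseteq> set ys0" by auto
      moreover have "y \<in> set xs" using lastxs xsne last_in_set by metis
      ultimately have "y \<in> set ys0" by blast
      then show ?thesis using yn by simp
    qed
  qed
qed

definition vpath :: "'a \<Rightarrow> 'a list" where
  "vpath x = (THE xs. is_path V E xs \<and> hd xs = v \<and> last xs = x)"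

lemma vpath: "x \<in> V \<Longrightarrow> is_path V E (vpath x) \<and> hd (vpath x) = v \<and> last (vpath x) = x"
proof -
  assume x: "x \<in> V"
  obtain xs where xs: "is_path V E xs" "hd xs = v" "last xs = x" using conn[OF root x] by blast
  show ?thesis unfolding vpath_def
    by (rule theI[of _ xs]) (use xs path_unique in auto)
qed

lemma vpath_eq: "is_path V E xs \<Longrightarrow> hd xs = v \<Longrightarrow> last xs = x \<Longrightarrow> vpath x = xs"
  using vpath[of x] path_unique[of xs "vpath x"] unfolding is_path_def
  by (metis last_in_set subsetD)

definition anc :: "'a \<Rightarrow> 'a set" where "anc x = set (vpath x)"
definition depth :: "'a \<Rightarrow> nat" where "depth x = length (vpath x) - 1"
definition par :: "'a \<Rightarrow> 'a" where "par x = last (butlast (vpath x))"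

lemma vpath_ne: "x \<in> V \<Longrightarrow> vpath x \<noteq> []" using vpath unfolding is_path_def by auto

lemma vpath_root: "vpath v = [v]"
  by (rule vpath_eq) (auto simp: root)

lemma anc_V: "x \<in> V \<Longrightarrow> anc x \<subseteq> V" using vpath unfolding anc_def is_path_def by auto
lemma self_anc: "x \<in> V \<Longrightarrow> x \<in> anc x" using vpath vpath_ne unfolding anc_def by (metis last_in_set)
lemma root_anc: "x \<in> V \<Longrightarrow> v \<in> anc x" using vpath vpath_ne unfolding anc_def by (metis hd_in_set)

lemma vpath_prefix:
  assumes x: "x \<in> V" and y: "y \<in> anc x"
  shows "\<exists>r. vpath x = vpath y @ r"
proof -
  obtain xs1 xs2 where xs: "vpath x = xs1 @ y # xs2" using y unfolding anc_def by (meson split_list)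
  have p: "is_path V E (vpath x)" "hd (vpath x) = v" using vpath[OF x] by auto
  have p1: "is_path V E (xs1 @ [y])"
  proof (cases "xs2 = []")
    case True then show ?thesis using p xs by simp
  next
    case False then show ?thesis using p xs is_path_append[of "xs1 @ [y]" xs2] by auto
  qed
  have "hd (xs1 @ [y]) = v" using p xs by (cases xs1) auto
  then have "vpath y = xs1 @ [y]" using vpath_eq[OF p1] by simp
  then show ?thesis using xs by simp
qed

lemma vpath_par:
  assumes x: "x \<in> V" and xv: "x \<noteq> v"
  shows "vpath x = vpath (par x) @ [x] \<and> par x \<in> V \<and> E (par x) x"
proof -
  have p: "is_path V E (vpath x)" "hd (vpath x) = v" "last (vpath x) = x" using vpath[OF x] by auto
  have ne: "vpath x \<noteq> []" using x vpath_ne by blast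
  have bne: "butlast (vpath x) \<noteq> []"
  proof
    assume "butlast (vpath x) = []"
    then have "vpath x = [x]" using ne p by (metis append_butlast_last_id append_Nil)
    then show False using p xv by simp
  qed
  have dec: "vpath x = butlast (vpath x) @ [x]" using ne p by (metis append_butlast_last_id)
  have pb: "is_path V E (butlast (vpath x))" and E1: "E (last (butlast (vpath x))) x"
    using p(1) dec bne is_path_snoc[of "butlast (vpath x)" V E x] by (metis)+
  have "hd (butlast (vpath x)) = v" using p(2) dec bne by (metis hd_append)
  then have "vpath (par x) = butlast (vpath x)" unfolding par_def using vpath_eq[OF pb _ refl] by blast
  moreover have "par x \<in> V" using pb bne unfolding par_def is_path_def by auto
  ultimately show ?thesis using dec E1 unfolding par_def by simp
qed

lemma anc_par: "x \<in> V \<Longrightarrow> x \<noteq> v \<Longrightarrow> anc x = insert x (anc (par x))"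
  using vpath_par unfolding anc_def by (metis Un_insert_right empty_set list.set(2) set_append sup_commute insert_is_Un)

lemma depth_par: "x \<in> V \<Longrightarrow> x \<noteq> v \<Longrightarrow> depth x = Suc (depth (par x))"
  using vpath_par vpath_ne unfolding depth_def
  by (metis Suc_pred' length_append_singleton length_greater_0_conv diff_Suc_1)

lemma depth_root: "depth v = 0" by (simp add: depth_def vpath_root)

lemma nth_depth: "x \<in> V \<Longrightarrow> y \<in> anc x \<Longrightarrow> vpath x ! depth y = y"
proof -
  assume x: "x \<in> V" and y: "y \<in> anc x"
  obtain r where r: "vpath x = vpath y @ r" using vpath_prefix[OF x y] by blast
  have yV: "y \<in> V" using anc_V[OF x] y by auto
  have ne: "vpath y \<noteq> []" using vpath_ne[OF yV] .
  have "vpath y ! depth y = y" using vpath[OF yV] ne unfolding depth_def by (simp add: last_conv_nth)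
  moreover have "depth y < length (vpath y)" using ne unfolding depth_def by simp
  ultimately show ?thesis using r by (simp add: nth_append)
qed

lemma anc_trans: "x \<in> V \<Longrightarrow> y \<in> anc x \<Longrightarrow> anc y \<subseteq> anc x"
  using vpath_prefix unfolding anc_def by fastforce

lemma anc_depth_le: "x \<in> V \<Longrightarrow> y \<in> anc x \<Longrightarrow> depth y \<le> depth x"
  using vpath_prefix unfolding depth_def by fastforce

lemma anc_depth_eq: "x \<in> V \<Longrightarrow> y \<in> anc x \<Longrightarrow> depth y = depth x \<Longrightarrow> y = x"
  using nth_depth self_anc by metis

lemma edge:
  assumes e: "E x y"
  shows "(y \<noteq> v \<and> par y = x) \<or> (x \<noteq> v \<and> par x = y)"
proof -
  have x: "x \<in> V" and y: "y \<in> V" using EV[OF e] by auto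
  have p: "is_path V E (vpath x)" "hd (vpath x) = v" "last (vpath x) = x" using vpath[OF x] by auto
  have ne: "vpath x \<noteq> []" using vpath_ne[OF x] .
  show ?thesis
  proof (cases "y \<in> anc x")
    case False
    have "is_path V E (vpath x @ [y])" using p ne False e y is_path_snoc[of "vpath x" V E y]
      unfolding anc_def by auto
    moreover have "hd (vpath x @ [y]) = v" using p ne by simp
    ultimately have vy: "vpath y = vpath x @ [y]" using vpath_eq[of "vpath x @ [y]" y] by simp
    have "y \<noteq> v" using False root_anc[OF x] by auto
    moreover have "par y = x" unfolding par_def vy using p by simp
    ultimately show ?thesis by blast
  next
    case True
    obtain r where r: "vpath x = vpath y @ r" using vpath_prefix[OF x True] by blast
    have rne: "r \<noteq> []" using r p vpath[OF y] irrE[of x] e by auto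
    have lr: "last r = x" using p r rne by simp
    show ?thesis
    proof (cases "r = [x]")
      case True
      have xv: "x \<noteq> v"
      proof
        assume "x = v"
        then have "vpath x = [v]" by (simp add: vpath_root)
        then show False using r True vpath_ne[OF y] by (cases "vpath y") auto
      qed
      have "vpath x = vpath (par x) @ [x]" using vpath_par[OF x xv] by simp
      then have "vpath (par x) = vpath y" using r True by simp
      then have "par x = y" using vpath[OF y] vpath[OF vpath_par[OF x xv, THEN conjunct2, THEN conjunct1]] by metis
      then show ?thesis using xv by blast
    next
      case False
      have len: "length r \<ge> 2" using False rne lr by (cases r) (auto split: if_splits simp: Suc_le_eq)
      obtain q where q: "vpath y = q @ [y]" using vpath[OF y] vpath_ne[OF y] by (metis append_butlast_last_id)
      have pc: "is_path V E (y # r)"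
      proof -
        have "vpath x = q @ (y # r)" using r q by simp
        then show ?thesis using p(1) is_path_append[of q "y # r" V E] is_path_Cons
          by (cases "q = []") auto
      qed
      have "is_cycle V E (y # r)" unfolding is_cycle_def using pc len lr e rne by auto
      then show ?thesis using nocycle by blast
    qed
  qed
qed

end


context rtree begin

definition Dv :: "'a \<Rightarrow> 'a set" where "Dv x = {w \<in> V. x \<in> anc w}"
definition ch :: "'a \<Rightarrow> 'a set" where "ch x = {w \<in> V. w \<noteq> v \<and> par w = x}"
definition good :: "'a set \<Rightarrow> bool" where
  "good S \<longleftrightarrow> v \<in> S \<and> S \<subseteq> V \<and> (\<forall>y\<in>S. anc y \<subseteq> S)"

lemma anc_root: "anc v = {v}" by (simp add: anc_def vpath_root)

lemma cross:
  assumes "y \<in> Dv w" "z \<notin> Dv w" "E y z"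
  shows "y = w \<and> z = par w \<and> w \<noteq> v"
proof -
  have y: "y \<in> V" and z: "z \<in> V" using EV[OF assms(3)] by auto
  have wy: "w \<in> anc y" using assms(1) unfolding Dv_def by auto
  from edge[OF assms(3)] show ?thesis
  proof
    assume h: "z \<noteq> v \<and> par z = y"
    then have "anc z = insert z (anc y)" using anc_par[OF z] by auto
    then have "z \<in> Dv w" using wy z unfolding Dv_def by auto
    then show ?thesis using assms(2) by simp
  next
    assume h: "y \<noteq> v \<and> par y = z"
    then have a: "anc y = insert y (anc z)" using anc_par[OF y] by auto
    show ?thesis
    proof (cases "w = y")
      case True then show ?thesis using h by auto
    next
      case False
      then have "w \<in> anc z" using a wy by auto
      then show ?thesis using assms(2) z unfolding Dv_def by auto
    qed
  qed
qed

lemma ch_props: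
  assumes "w \<in> ch x"
  shows "w \<in> V \<and> x \<in> V \<and> w \<noteq> v \<and> E x w \<and> depth w = Suc (depth x) \<and> x \<in> anc w \<and> par w = x"
proof -
  have w: "w \<in> V" "w \<noteq> v" "par w = x" using assms unfolding ch_def by auto
  then show ?thesis using vpath_par[OF w(1,2)] depth_par[OF w(1,2)] anc_par[OF w(1,2)] self_anc
    by auto
qed

lemma Dv_sub_V: "Dv x \<subseteq> V" unfolding Dv_def by auto
lemma finite_Dv: "finite (Dv x)" using finV Dv_sub_V finite_subset by blast
lemma self_Dv: "x \<in> V \<Longrightarrow> x \<in> Dv x" unfolding Dv_def using self_anc by auto
lemma root_notin_Dv: "w \<noteq> v \<Longrightarrow> v \<notin> Dv w" unfolding Dv_def using anc_root by auto
lemma Dv_root: "Dv v = V" unfolding Dv_def using root_anc by auto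

lemma Dv_trans: "y \<in> Dv x \<Longrightarrow> Dv y \<subseteq> Dv x"
  unfolding Dv_def using anc_trans by blast

lemma Dv_depth: "y \<in> Dv x \<Longrightarrow> y \<noteq> x \<Longrightarrow> depth x < depth y"
  unfolding Dv_def using anc_depth_le anc_depth_eq by fastforce

lemma ch_Dv_sub: "w \<in> ch x \<Longrightarrow> Dv w \<subseteq> Dv x"
  using ch_props Dv_trans self_Dv unfolding Dv_def by blast

lemma notin_ch_Dv: "w \<in> ch x \<Longrightarrow> x \<notin> Dv w"
  using ch_props Dv_depth by fastforce

lemma ch_disj: "w1 \<in> ch x \<Longrightarrow> w2 \<in> ch x \<Longrightarrow> w1 \<noteq> w2 \<Longrightarrow> Dv w1 \<inter> Dv w2 = {}"
proof -
  assume a: "w1 \<in> ch x" "w2 \<in> ch x" "w1 \<noteq> w2"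
  { fix y assume "y \<in> Dv w1" "y \<in> Dv w2"
    then have y: "y \<in> V" "w1 \<in> anc y" "w2 \<in> anc y" unfolding Dv_def by auto
    have "depth w1 = depth w2" using a ch_props by auto
    then have "w1 = w2" using nth_depth[OF y(1) y(2)] nth_depth[OF y(1) y(3)] by metis
    then have False using a by simp }
  then show ?thesis by blast
qed

lemma anc_ch: "y \<in> V \<Longrightarrow> x \<in> anc y \<Longrightarrow> y \<noteq> x \<Longrightarrow> \<exists>w\<in>ch x. w \<in> anc y"
proof (induction "depth y" arbitrary: y rule: less_induct)
  case less
  have yv: "y \<noteq> v" using less.prems anc_root by auto
  have a: "anc y = insert y (anc (par y))" using anc_par[OF less.prems(1) yv] .
  have pV: "par y \<in> V" and dp: "depth y = Suc (depth (par y))"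
    using vpath_par[OF less.prems(1) yv] depth_par[OF less.prems(1) yv] by auto
  have xp: "x \<in> anc (par y)" using a less.prems by auto
  show ?case
  proof (cases "par y = x")
    case True
    then have "y \<in> ch x" using less.prems(1) yv unfolding ch_def by auto
    then show ?thesis using self_anc[OF less.prems(1)] by blast
  next
    case False
    obtain w where "w \<in> ch x" "w \<in> anc (par y)" using less.hyps[OF _ pV xp False] dp by auto
    then show ?thesis using a by blast
  qed
qed

lemma Dv_decomp: "x \<in> V \<Longrightarrow> Dv x = insert x (\<Union>w\<in>ch x. Dv w)"
proof
  assume x: "x \<in> V"
  show "Dv x \<subseteq> insert x (\<Union>w\<in>ch x. Dv w)"
  proof
    fix y assume y: "y \<in> Dv x"
    show "y \<in> insert x (\<Union>w\<in>ch x. Dv w)"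
    proof (cases "y = x")
      case False
      then obtain w where "w \<in> ch x" "w \<in> anc y" using anc_ch y unfolding Dv_def by blast
      then show ?thesis using y unfolding Dv_def by auto
    qed simp
  qed
  show "insert x (\<Union>w\<in>ch x. Dv w) \<subseteq> Dv x" using self_Dv[OF x] ch_Dv_sub by auto
qed

lemma good_V: "good V" unfolding good_def using root anc_V by auto

lemma good_path: "good S \<Longrightarrow> y \<in> S \<Longrightarrow> is_path S E (vpath y)"
  using vpath[of y] unfolding good_def is_path_def anc_def by auto

lemma good_path_eq: "good S \<Longrightarrow> is_path S E xs \<Longrightarrow> hd xs = v \<Longrightarrow> last xs = y \<Longrightarrow> xs = vpath y"
  using vpath_eq is_path_mono unfolding good_def by metis

lemma good_dist: assumes "good S" "y \<in> S" shows "dist S E v y = depth y"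
proof -
  have "(\<lambda>n. \<exists>xs. is_path S E xs \<and> hd xs = v \<and> last xs = y \<and> length xs = Suc n) = (\<lambda>n. n = depth y)"
  proof
    fix n
    have yV: "y \<in> V" using assms unfolding good_def by auto
    show "(\<exists>xs. is_path S E xs \<and> hd xs = v \<and> last xs = y \<and> length xs = Suc n) = (n = depth y)"
    proof
      assume "\<exists>xs. is_path S E xs \<and> hd xs = v \<and> last xs = y \<and> length xs = Suc n"
      then obtain xs where xs: "is_path S E xs" "hd xs = v" "last xs = y" "length xs = Suc n" by blast
      then have "xs = vpath y" using good_path_eq[OF assms(1)] by blast
      then show "n = depth y" using xs(4) unfolding depth_def by simp
    next
      assume n: "n = depth y"
      have "length (vpath y) = Suc n" using vpath_ne[OF yV] unfolding n depth_def by (cases "vpath y") auto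
      then show "\<exists>xs. is_path S E xs \<and> hd xs = v \<and> last xs = y \<and> length xs = Suc n"
        using good_path[OF assms] vpath[OF yV] by blast
    qed
  qed
  then show ?thesis unfolding dist_def by (auto intro!: Least_equality)
qed

lemma good_desc: assumes "good S" shows "desc S E v u = Dv u \<inter> S"
proof -
  have "\<And>w. w \<in> S \<Longrightarrow> (\<exists>xs. is_path S E xs \<and> hd xs = v \<and> last xs = w \<and> u \<in> set xs) \<longleftrightarrow> u \<in> anc w"
  proof -
    fix w assume w: "w \<in> S"
    have wV: "w \<in> V" using assms w unfolding good_def by auto
    show "(\<exists>xs. is_path S E xs \<and> hd xs = v \<and> last xs = w \<and> u \<in> set xs) \<longleftrightarrow> u \<in> anc w"
      using good_path_eq[OF assms] good_path[OF assms w] vpath[OF wV] unfolding anc_def by metis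
  qed
  then show ?thesis unfolding desc_def Dv_def using assms unfolding good_def by auto
qed

lemma good_children: assumes "good S" "u \<in> S" shows "children S E v u = ch u \<inter> S"
proof -
  have uV: "u \<in> V" using assms unfolding good_def by auto
  { fix w assume w: "w \<in> S" "E u w" "depth w = Suc (depth u)"
    have "w \<in> ch u"
      using edge[OF w(2)] depth_par[OF uV] w EV[OF w(2)] unfolding ch_def by auto }
  moreover
  { fix w assume "w \<in> ch u" "w \<in> S"
    then have "E u w \<and> depth w = Suc (depth u)" using ch_props by auto }
  ultimately show ?thesis unfolding children_def using good_dist[OF assms(1)] assms(2) by auto
qed

lemma par_notin_ch: "x \<in> V \<Longrightarrow> x \<noteq> v \<Longrightarrow> par x \<notin> ch x"
proof
  assume x: "x \<in> V" "x \<noteq> v" and p: "par x \<in> ch x"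
  have "depth (par x) = Suc (depth x)" using ch_props[OF p] by blast
  moreover have "depth x = Suc (depth (par x))" using depth_par[OF x] .
  ultimately show False by simp
qed

lemma good_nbrs: assumes "good S" "x \<in> S"
  shows "{y \<in> S. E x y} = (if x = v then {} else {par x}) \<union> (ch x \<inter> S)"
proof -
  have xV: "x \<in> V" using assms unfolding good_def by auto
  have pS: "par x \<in> S" if xv: "x \<noteq> v"
  proof -
    have "par x \<in> anc x" using anc_par[OF xV xv] self_anc vpath_par[OF xV xv] by blast
    then show ?thesis using assms unfolding good_def by blast
  qed
  show ?thesis
  proof (intro equalityI subsetI)
    fix y assume y: "y \<in> {y \<in> S. E x y}"
    then show "y \<in> (if x = v then {} else {par x}) \<union> (ch x \<inter> S)"
      using edge[of x y] EV[of x y] unfolding ch_def by auto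
  next
    fix y assume "y \<in> (if x = v then {} else {par x}) \<union> (ch x \<inter> S)"
    then show "y \<in> {y \<in> S. E x y}"
      using pS vpath_par[OF xV] symE ch_props by (auto split: if_splits)
  qed
qed

lemma good_deg: assumes "good S" "x \<in> S"
  shows "deg S E x = (if x = v then 0 else 1) + card (ch x \<inter> S)"
proof -
  have xV: "x \<in> V" using assms unfolding good_def by auto
  have f: "finite (ch x \<inter> S)" using finV unfolding ch_def by auto
  show ?thesis unfolding deg_def good_nbrs[OF assms] using par_notin_ch[OF xV] f by auto
qed

lemma good_diff:
  assumes "good S" "W \<subseteq> V - {v}"
  shows "good (S - (\<Union>w\<in>W. Dv w))"
  unfolding good_def
proof (intro conjI ballI)
  show "v \<in> S - (\<Union>w\<in>W. Dv w)" using assms root_notin_Dv unfolding good_def by auto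
  show "S - (\<Union>w\<in>W. Dv w) \<subseteq> V" using assms unfolding good_def by auto
  fix y assume y: "y \<in> S - (\<Union>w\<in>W. Dv w)"
  have yV: "y \<in> V" using y assms unfolding good_def by auto
  show "anc y \<subseteq> S - (\<Union>w\<in>W. Dv w)"
  proof
    fix a assume a: "a \<in> anc y"
    have "a \<in> S" using a y assms unfolding good_def by auto
    moreover have "a \<notin> (\<Union>w\<in>W. Dv w)"
    proof
      assume "a \<in> (\<Union>w\<in>W. Dv w)"
      then obtain w where "w \<in> W" "w \<in> anc a" unfolding Dv_def by auto
      then have "y \<in> Dv w" using anc_trans[OF yV a] yV unfolding Dv_def by auto
      then show False using y \<open>w \<in> W\<close> by auto
    qed
    ultimately show "a \<in> S - (\<Union>w\<in>W. Dv w)" by simp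
  qed
qed

end


definition dis :: "('a \<Rightarrow> 'a \<Rightarrow> bool) \<Rightarrow> 'a set \<Rightarrow> bool" where
  "dis E F \<longleftrightarrow> (\<forall>x\<in>F. card {y\<in>F. E x y} \<le> 1)"

definition fd :: "nat \<Rightarrow> nat" where "fd n = n - n div 3"

lemma n3: obtains q r where "n = 3*q+r" "r < (3::nat)"
proof
  show "n = 3*(n div 3) + n mod 3" by simp
  show "n mod 3 < (3::nat)" by simp
qed
lemma r3: "(r::nat) < 3 \<Longrightarrow> r = 0 \<or> r = 1 \<or> r = 2" by auto
lemma fd_a1: assumes h: "True" shows "fd (n-1) \<le> fd n"
proof -
  obtain q r where n: "n = 3*q+r" "r < 3" by (rule n3)
  show ?thesis using h n r3[OF n(2)] by (cases q) (auto simp: fd_def)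
qed
lemma fd_a2: assumes h: "n \<ge> 2" shows "1 + fd (n-2) \<le> fd n"
proof -
  obtain q r where n: "n = 3*q+r" "r < 3" by (rule n3)
  show ?thesis using h n r3[OF n(2)] by (cases q) (auto simp: fd_def)
qed
lemma fd_a3: assumes h: "n \<ge> 2" shows "2 + fd (n-3) \<le> fd n"
proof -
  obtain q r where n: "n = 3*q+r" "r < 3" by (rule n3)
  show ?thesis using h n r3[OF n(2)] by (cases q) (auto simp: fd_def)
qed
lemma fd_a4: assumes h: "n mod 3 = 0" shows "fd (n-1) = fd n"
proof -
  obtain q r where n: "n = 3*q+r" "r < 3" by (rule n3)
  show ?thesis using h n r3[OF n(2)] by (cases q) (auto simp: fd_def)
qed
lemma fd_a5: assumes h: "n mod 3 = 1" shows "1 + fd (n-2) = fd n"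
proof -
  obtain q r where n: "n = 3*q+r" "r < 3" by (rule n3)
  show ?thesis using h n r3[OF n(2)] by (cases q) (auto simp: fd_def)
qed
lemma fd_a6: assumes h: "n mod 3 = 2" shows "2 + fd (n-3) = fd n"
proof -
  obtain q r where n: "n = 3*q+r" "r < 3" by (rule n3)
  show ?thesis using h n r3[OF n(2)] by (cases q) (auto simp: fd_def)
qed
lemma fd_0: "fd 0 = 0" and fd_1: "fd 1 = 1" unfolding fd_def by auto

lemma fd_a8: assumes h: "n \<ge> 1" shows "fd n = fd (n-1) + (if n mod 3 = 0 then 0 else 1)"
proof -
  obtain q r where n: "n = 3*q+r" "r < 3" by (rule n3)
  show ?thesis using h n r3[OF n(2)] by (cases q) (auto simp: fd_def)
qed
lemma fd_a9: assumes h: "n mod 3 = 1" shows "1 + fd (n-2) = fd (n-1) + 1"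
proof -
  obtain q r where n: "n = 3*q+r" "r < 3" by (rule n3)
  show ?thesis using h n r3[OF n(2)] by (cases q) (auto simp: fd_def)
qed
lemma fd_a7: assumes h: "n \<ge> 1" shows "1 + fd (n-2) \<le> fd (n-1) + (if n mod 3 = 1 then 1 else 0)"
proof (cases "n mod 3 = 1")
  case True then show ?thesis using fd_a9[OF True] by simp
next
  case False
  have n2: "n - 1 \<ge> 1"
  proof (rule ccontr)
    assume "\<not> n - 1 \<ge> 1"
    then have "n = 1" using h by simp
    then show False using False by simp
  qed
  have m: "(n-1) mod 3 \<noteq> 0" using False h by presburger
  have "fd (n-1) = fd (n-1-1) + 1" using fd_a8[OF n2] m by simp
  then show ?thesis using False by (simp add: numeral_2_eq_2)
qed

context rtree begin

lemma nbr_finite: "finite {y\<in>H. E x y}"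
  using finV EV by (metis (no_types, lifting) finite_subset mem_Collect_eq subsetI)

lemma dis_two: "dis E H \<Longrightarrow> x \<in> H \<Longrightarrow> a \<in> H \<Longrightarrow> b \<in> H \<Longrightarrow> E x a \<Longrightarrow> E x b \<Longrightarrow> a = b"
proof (rule ccontr)
  assume h: "dis E H" "x \<in> H" "a \<in> H" "b \<in> H" "E x a" "E x b" "a \<noteq> b"
  have "{a, b} \<subseteq> {y\<in>H. E x y}" using h by auto
  then have "card {a,b} \<le> card {y\<in>H. E x y}" using nbr_finite card_mono by blast
  moreover have "card {y\<in>H. E x y} \<le> 1" using h unfolding dis_def by auto
  ultimately show False using h(7) by simp
qed

lemma dis_mono: "dis E F \<Longrightarrow> G \<subseteq> F \<Longrightarrow> dis E G"
  unfolding dis_def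
proof
  fix x assume a: "\<forall>x\<in>F. card {y \<in> F. E x y} \<le> 1" "G \<subseteq> F" "x \<in> G"
  have "card {y \<in> G. E x y} \<le> card {y \<in> F. E x y}" using nbr_finite a(2) by (intro card_mono) auto
  then show "card {y \<in> G. E x y} \<le> 1" using a by force
qed

lemma dis_empty: "dis E {}" unfolding dis_def by auto
lemma dis_single: "dis E {x}"
proof -
  have e: "{y\<in>{x}. E x y} = {}" using irrE by auto
  show ?thesis unfolding dis_def
  proof
    fix z assume "z \<in> {x}"
    then have "z = x" by simp
    then show "card {y\<in>{x}. E z y} \<le> 1" using e by (metis card.empty zero_le_one)
  qed
qed

lemma dis_insert:
  assumes "dis E G" "card {z\<in>G. E x z} \<le> 1" "\<forall>y\<in>G. E y x \<longrightarrow> {z\<in>G. E y z} = {}"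
  shows "dis E (insert x G)"
  unfolding dis_def
proof
  fix y assume y: "y \<in> insert x G"
  show "card {z \<in> insert x G. E y z} \<le> 1"
  proof (cases "y = x")
    case True
    then have "{z \<in> insert x G. E y z} = {z\<in>G. E x z}" using irrE by auto
    then show ?thesis using assms(2) by simp
  next
    case False
    then have yG: "y \<in> G" using y by auto
    show ?thesis
    proof (cases "E y x")
      case True
      then have "{z \<in> insert x G. E y z} = {x}" using assms(3) yG by auto
      then show ?thesis by simp
    next
      case False
      then have "{z \<in> insert x G. E y z} = {z\<in>G. E y z}" by auto
      then show ?thesis using assms(1) yG unfolding dis_def by simp
    qed
  qed
qed

definition leg :: "'a set \<Rightarrow> 'a \<Rightarrow> bool" where
  "leg S x \<longleftrightarrow> x \<in> S \<and> x \<noteq> v \<and> (\<forall>y \<in> Dv x \<inter> S. card (ch y \<inter> S) \<le> 1)"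

lemma DS_decomp: assumes "good S" "x \<in> S"
  shows "Dv x \<inter> S = insert x (\<Union>w\<in>ch x \<inter> S. Dv w \<inter> S)"
proof -
  have xV: "x \<in> V" using assms unfolding good_def by auto
  have "Dv w \<inter> S = {}" if "w \<in> ch x" "w \<notin> S" for w
    using that assms(1) unfolding good_def Dv_def by auto
  then show ?thesis using Dv_decomp[OF xV] assms(2) by auto
qed

definition legP :: "'a set \<Rightarrow> 'a \<Rightarrow> nat \<Rightarrow> bool" where
  "legP S x n \<longleftrightarrow> n \<ge> 1 \<and>
    (\<forall>H. dis E H \<longrightarrow> card (H \<inter> (Dv x \<inter> S)) \<le> fd n) \<and>
    (\<forall>H. dis E H \<longrightarrow> x \<notin> H \<longrightarrow> card (H \<inter> (Dv x \<inter> S)) \<le> fd (n-1)) \<and>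
    (\<forall>H. dis E H \<longrightarrow> x \<in> H \<longrightarrow> par x \<in> H \<longrightarrow> card (H \<inter> (Dv x \<inter> S)) \<le> 1 + fd (n-2)) \<and>
    (\<exists>G \<subseteq> Dv x \<inter> S. x \<notin> G \<and> dis E G \<and> card G = fd (n-1)) \<and>
    (\<exists>G \<subseteq> Dv x \<inter> S. dis E G \<and> card G = fd n) \<and>
    (\<exists>G \<subseteq> Dv x \<inter> S. x \<in> G \<and> dis E G \<and> (\<forall>z\<in>G. \<not> E x z) \<and> card G = 1 + fd (n-2))"

lemma leg_facts:
  assumes g: "good S"
  shows "leg S x \<Longrightarrow> legP S x (card (Dv x \<inter> S))"
proof (induction "card (Dv x \<inter> S)" arbitrary: x rule: less_induct)
  case less
  define D where "D = Dv x \<inter> S"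
  define n where "n = card D"
  have xS: "x \<in> S" and xv: "x \<noteq> v" and c1: "card (ch x \<inter> S) \<le> 1"
    using less.prems self_Dv g unfolding leg_def good_def by auto
  have xV: "x \<in> V" using xS g unfolding good_def by auto
  have finD: "finite D" unfolding D_def using finite_Dv by auto
  have fin_ch: "finite (ch x \<inter> S)" using finV unfolding ch_def by auto
  have xD: "x \<in> D" unfolding D_def using self_Dv[OF xV] xS by auto
  have Epx: "E x (par x)" using vpath_par[OF xV xv] symE by auto
  show ?case
  proof (cases "ch x \<inter> S = {}")
    case True
    then have D1: "D = {x}" using DS_decomp[OF g xS] unfolding D_def by auto
    then have n1: "n = 1" unfolding n_def by simp
    have "(\<forall>H. dis E H \<longrightarrow> card (H \<inter> D) \<le> fd n)"
      using D1 n1 fd_1 by (auto simp: card_le_Suc0_iff_eq)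
    moreover have "(\<forall>H. dis E H \<longrightarrow> x \<notin> H \<longrightarrow> card (H \<inter> D) \<le> fd (n-1))" using D1 by auto
    moreover have "(\<forall>H. dis E H \<longrightarrow> x \<in> H \<longrightarrow> par x \<in> H \<longrightarrow> card (H \<inter> D) \<le> 1 + fd (n-2))"
      using D1 by (auto simp: card_le_Suc0_iff_eq)
    moreover have "\<exists>G \<subseteq> D. x \<notin> G \<and> dis E G \<and> card G = fd (n-1)"
      using n1 fd_0 dis_empty by (intro exI[of _ "{}"]) auto
    moreover have "\<exists>G \<subseteq> D. dis E G \<and> card G = fd n"
      using n1 fd_1 dis_single D1 by (intro exI[of _ "{x}"]) auto
    moreover have "\<exists>G \<subseteq> D. x \<in> G \<and> dis E G \<and> (\<forall>z\<in>G. \<not> E x z) \<and> card G = 1 + fd (n-2)"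
      using n1 fd_0 dis_single D1 irrE by (intro exI[of _ "{x}"]) auto
    ultimately show ?thesis unfolding legP_def D_def[symmetric] n_def[symmetric] using n1 by auto
  next
    case False
    then obtain c where c0: "c \<in> ch x \<inter> S" by blast
    have chc: "ch x \<inter> S = {c}" using c0 c1 fin_ch by (auto simp: card_le_Suc0_iff_eq One_nat_def)
    have cch: "c \<in> ch x" and cS: "c \<in> S" using chc by auto
    have cp: "c \<in> V" "c \<noteq> v" "E x c" "par c = x" using ch_props[OF cch] by auto
    define Dc where "Dc = Dv c \<inter> S"
    have Ddec: "D = insert x Dc" using DS_decomp[OF g xS] chc unfolding D_def Dc_def by auto
    have xDc: "x \<notin> Dc" using notin_ch_Dv[OF cch] unfolding Dc_def by auto
    have finDc: "finite Dc" unfolding Dc_def using finite_Dv by auto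
    have nm: "n = Suc (card Dc)" unfolding n_def Ddec using xDc finDc by simp
    have legc: "leg S c" using less.prems cS cp ch_Dv_sub[OF cch] unfolding leg_def by auto
    have "legP S c (card Dc)"
      using less.hyps[OF _ legc] nm unfolding n_def Dc_def D_def by auto
    then have m1: "card Dc \<ge> 1"
      and B1c: "\<And>H. dis E H \<Longrightarrow> card (H \<inter> Dc) \<le> fd (n-1)"
      and B2c: "\<And>H. dis E H \<Longrightarrow> c \<notin> H \<Longrightarrow> card (H \<inter> Dc) \<le> fd (n-2)"
      and B3c: "\<And>H. dis E H \<Longrightarrow> c \<in> H \<Longrightarrow> x \<in> H \<Longrightarrow> card (H \<inter> Dc) \<le> 1 + fd (n-3)"
      and G0c: "\<exists>G \<subseteq> Dc. c \<notin> G \<and> dis E G \<and> card G = fd (n-2)"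
      and G1c: "\<exists>G \<subseteq> Dc. dis E G \<and> card G = fd (n-1)"
      and G2c: "\<exists>G \<subseteq> Dc. c \<in> G \<and> dis E G \<and> (\<forall>z\<in>G. \<not> E c z) \<and> card G = 1 + fd (n-3)"
      unfolding legP_def Dc_def[symmetric] using nm cp(4)
      by (auto simp: numeral_3_eq_3 numeral_2_eq_2)
    have n2: "n \<ge> 2" using nm m1 by simp
    have onlyc: "\<And>z. z \<in> Dc \<Longrightarrow> E x z \<Longrightarrow> z = c"
    proof -
      fix z assume "z \<in> Dc" "E x z"
      then show "z = c" using cross[of z c x] xDc symE xS unfolding Dc_def by auto
    qed
    have Hsplit: "\<And>H. H \<inter> D = (if x \<in> H then insert x (H \<inter> Dc) else H \<inter> Dc)"
      unfolding Ddec by auto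
    have cardH: "\<And>H. card (H \<inter> D) = (if x \<in> H then 1 + card (H \<inter> Dc) else card (H \<inter> Dc))"
      using Hsplit xDc finDc by (simp add: Int_absorb1)
    have B2: "\<forall>H. dis E H \<longrightarrow> x \<notin> H \<longrightarrow> card (H \<inter> D) \<le> fd (n-1)"
      using cardH B1c by auto
    have B3: "\<forall>H. dis E H \<longrightarrow> x \<in> H \<longrightarrow> par x \<in> H \<longrightarrow> card (H \<inter> D) \<le> 1 + fd (n-2)"
    proof (intro allI impI)
      fix H assume H: "dis E H" "x \<in> H" "par x \<in> H"
      have "c \<noteq> par x" using par_notin_ch[OF xV xv] cch by auto
      then have "c \<notin> H" using dis_two[OF H(1) H(2) _ H(3) cp(3) Epx] by auto
      then show "card (H \<inter> D) \<le> 1 + fd (n-2)" using cardH B2c H by auto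
    qed
    have B1: "\<forall>H. dis E H \<longrightarrow> card (H \<inter> D) \<le> fd n"
    proof (intro allI impI)
      fix H assume H: "dis E H"
      show "card (H \<inter> D) \<le> fd n"
      proof (cases "x \<in> H")
        case False then show ?thesis using B2 H fd_a1[of n] by force
      next
        case True
        show ?thesis
        proof (cases "c \<in> H")
          case False then show ?thesis using cardH B2c H True fd_a2[OF n2] by force
        next
          case cH: True then show ?thesis using cardH B3c[OF H cH True] True fd_a3[OF n2] by force
        qed
      qed
    qed
    obtain G1 where G1: "G1 \<subseteq> Dc" "dis E G1" "card G1 = fd (n-1)" using G1c by blast
    obtain G0 where G0: "G0 \<subseteq> Dc" "c \<notin> G0" "dis E G0" "card G0 = fd (n-2)" using G0c by blast
    obtain G2 where G2: "G2 \<subseteq> Dc" "c \<in> G2" "dis E G2" "\<forall>z\<in>G2. \<not> E c z" "card G2 = 1 + fd (n-3)"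
      using G2c by blast
    have X0: "\<exists>G \<subseteq> D. x \<notin> G \<and> dis E G \<and> card G = fd (n-1)"
      using G1 xDc Ddec by (intro exI[of _ G1]) auto
    have nb0: "{z\<in>G0. E x z} = {}" using G0 onlyc by auto
    have nb0': "\<forall>y\<in>G0. E y x \<longrightarrow> {z\<in>G0. E y z} = {}" using G0 onlyc symE by blast
    have X2: "\<exists>G \<subseteq> D. x \<in> G \<and> dis E G \<and> (\<forall>z\<in>G. \<not> E x z) \<and> card G = 1 + fd (n-2)"
    proof (intro exI[of _ "insert x G0"] conjI)
      have "card {z\<in>G0. E x z} \<le> 1" using nb0 by (metis card.empty zero_le_one)
      then show "dis E (insert x G0)" using dis_insert[OF G0(3) _ nb0'] by blast
      show "\<forall>z\<in>insert x G0. \<not> E x z" using nb0 irrE by auto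
      have "x \<notin> G0" using G0(1) xDc by blast
      then show "card (insert x G0) = 1 + fd (n-2)" using G0(4) finite_subset[OF G0(1) finDc] by simp
    qed (use G0 Ddec in auto)
    have nb2: "{z\<in>G2. E x z} \<subseteq> {c}" using G2 onlyc by auto
    then have "card {z\<in>G2. E x z} \<le> card {c}" by (intro card_mono) auto
    then have nb2c: "card {z\<in>G2. E x z} \<le> 1" by simp
    have nb2': "\<forall>y\<in>G2. E y x \<longrightarrow> {z\<in>G2. E y z} = {}" using G2 onlyc symE by blast
    have X1: "\<exists>G \<subseteq> D. dis E G \<and> card G = fd n"
    proof -
      have "n mod 3 = 0 \<or> n mod 3 = 1 \<or> n mod 3 = 2" by presburger
      then show ?thesis
      proof (elim disjE)
        assume "n mod 3 = 0" then show ?thesis using X0 fd_a4 by metis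
      next
        assume "n mod 3 = 1" then show ?thesis using X2 fd_a5 by metis
      next
        assume h: "n mod 3 = 2"
        show ?thesis
        proof (intro exI[of _ "insert x G2"] conjI)
          show "dis E (insert x G2)" using dis_insert[OF G2(3) nb2c nb2'] .
          have "x \<notin> G2" using G2(1) xDc by blast
          then show "card (insert x G2) = fd n" using G2(5) finite_subset[OF G2(1) finDc] fd_a6[OF h] by simp
        qed (use G2 Ddec in auto)
      qed
    qed
    show ?thesis unfolding legP_def D_def[symmetric] n_def[symmetric]
      using n2 B1 B2 B3 X0 X1 X2 by auto
  qed
qed

end


context rtree begin

lemma fam_union_nbr:
  assumes W: "W \<subseteq> ch c" and h: "\<forall>w\<in>W. h w \<subseteq> Dv w" and w: "w \<in> W" and y: "y \<in> h w"
  shows "{z \<in> \<Union>(h ` W). E y z} = {z \<in> h w. E y z}"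
proof (intro equalityI subsetI)
  fix z assume z: "z \<in> {z \<in> \<Union>(h ` W). E y z}"
  then obtain w' where w': "w' \<in> W" "z \<in> h w'" "E y z" by auto
  show "z \<in> {z \<in> h w. E y z}"
  proof (cases "w' = w")
    case True then show ?thesis using w' by auto
  next
    case False
    have zD: "z \<in> Dv w'" using w' h by auto
    have "z \<notin> Dv w" using ch_disj[of w c w'] W w w'(1) False zD by auto
    then have "z = par w \<and> w \<noteq> v" using cross[of y w z] y h w w'(3) by auto
    then have "z = c" using W w ch_props by auto
    then show ?thesis using zD notin_ch_Dv[of w' c] W w'(1) by auto
  qed
qed (use w in auto)

lemma fam_union:
  assumes W: "W \<subseteq> ch c" and h: "\<forall>w\<in>W. h w \<subseteq> Dv w \<and> dis E (h w)"
  shows "card (\<Union>(h ` W)) = (\<Sum>w\<in>W. card (h w))"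
    and "dis E (\<Union>(h ` W))"
    and "c \<notin> \<Union>(h ` W)"
    and "(\<forall>w\<in>W. w \<in> h w \<longrightarrow> (\<forall>z\<in>h w. \<not> E w z)) \<Longrightarrow>
         (\<forall>w1\<in>W. \<forall>w2\<in>W. w1 \<in> h w1 \<longrightarrow> w2 \<in> h w2 \<longrightarrow> w1 = w2) \<Longrightarrow> dis E (insert c (\<Union>(h ` W)))"
proof -
  have finW: "finite W" using W finV unfolding ch_def by (metis (no_types, lifting) finite_subset mem_Collect_eq subsetI)
  have finh: "\<forall>w\<in>W. finite (h w)" using h finite_Dv finite_subset by blast
  have hsub: "\<forall>w\<in>W. h w \<subseteq> Dv w" using h by auto
  show "card (\<Union>(h ` W)) = (\<Sum>w\<in>W. card (h w))"
  proof (rule card_UN_disjoint[OF finW finh])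
    show "\<forall>i\<in>W. \<forall>j\<in>W. i \<noteq> j \<longrightarrow> h i \<inter> h j = {}"
      using ch_disj W h by blast
  qed
  show D: "dis E (\<Union>(h ` W))" unfolding dis_def
  proof
    fix y assume "y \<in> \<Union>(h ` W)"
    then obtain w where w: "w \<in> W" "y \<in> h w" by auto
    show "card {z \<in> \<Union>(h ` W). E y z} \<le> 1"
      using fam_union_nbr[OF W hsub w] h w unfolding dis_def by auto
  qed
  show cn: "c \<notin> \<Union>(h ` W)" using h W notin_ch_Dv by blast
  assume c1: "\<forall>w\<in>W. w \<in> h w \<longrightarrow> (\<forall>z\<in>h w. \<not> E w z)"
    and c2: "\<forall>w1\<in>W. \<forall>w2\<in>W. w1 \<in> h w1 \<longrightarrow> w2 \<in> h w2 \<longrightarrow> w1 = w2"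
  have sub: "{z \<in> \<Union>(h ` W). E c z} \<subseteq> {w \<in> W. w \<in> h w}"
  proof
    fix z assume "z \<in> {z \<in> \<Union>(h ` W). E c z}"
    then obtain w where w: "w \<in> W" "z \<in> h w" "E c z" by auto
    have "c \<notin> Dv w" using notin_ch_Dv W w by auto
    then have "z = w" using cross[of z w c] w h symE by auto
    then show "z \<in> {w \<in> W. w \<in> h w}" using w by auto
  qed
  have "card {w \<in> W. w \<in> h w} \<le> 1" using c2 finW by (auto simp: card_le_Suc0_iff_eq)
  then have k1: "card {z \<in> \<Union>(h ` W). E c z} \<le> 1"
  proof -
    have "finite {w \<in> W. w \<in> h w}" using finW by simp
    then show ?thesis using card_mono[OF _ sub] \<open>card {w \<in> W. w \<in> h w} \<le> 1\<close> by linarith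
  qed
  have k2: "\<forall>y\<in>\<Union>(h ` W). E y c \<longrightarrow> {z \<in> \<Union>(h ` W). E y z} = {}"
  proof (intro ballI impI)
    fix y assume y: "y \<in> \<Union>(h ` W)" "E y c"
    then obtain w where w: "w \<in> W" "y \<in> h w" by auto
    have "c \<notin> Dv w" using notin_ch_Dv W w by auto
    then have "y = w" using cross[of y w c] w h y by auto
    then show "{z \<in> \<Union>(h ` W). E y z} = {}"
      using fam_union_nbr[OF W hsub w] c1 w by auto
  qed
  show "dis E (insert c (\<Union>(h ` W)))" using dis_insert[OF D k1 k2] .
qed


context
  fixes S c
  assumes g: "good S" and cS: "c \<in> S" and legs: "\<forall>w\<in>ch c \<inter> S. leg S w"
begin

abbreviation "W \<equiv> ch c \<inter> S"
abbreviation "N w \<equiv> card (Dv w \<inter> S)"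

lemma finW: "finite W" using finV unfolding ch_def by auto

lemma lpW: "w \<in> W \<Longrightarrow> legP S w (N w)" using leg_facts[OF g] legs by auto

lemma N1: "w \<in> W \<Longrightarrow> N w \<ge> 1" using lpW unfolding legP_def by auto

lemma sp_dec: "Dv c \<inter> S = insert c (\<Union>w\<in>W. Dv w \<inter> S)" using DS_decomp[OF g cS] .

lemma sp_card: "card (H \<inter> (Dv c \<inter> S)) = (if c \<in> H then 1 else 0) + (\<Sum>w\<in>W. card (H \<inter> (Dv w \<inter> S)))"
proof -
  have u: "card (\<Union>w\<in>W. H \<inter> (Dv w \<inter> S)) = (\<Sum>w\<in>W. card (H \<inter> (Dv w \<inter> S)))"
  proof (rule card_UN_disjoint[OF finW])
    show "\<forall>i\<in>W. finite (H \<inter> (Dv i \<inter> S))" using finite_Dv by auto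
    show "\<forall>i\<in>W. \<forall>j\<in>W. i \<noteq> j \<longrightarrow> H \<inter> (Dv i \<inter> S) \<inter> (H \<inter> (Dv j \<inter> S)) = {}"
      using ch_disj by blast
  qed
  have cn: "c \<notin> (\<Union>w\<in>W. H \<inter> (Dv w \<inter> S))" using notin_ch_Dv by auto
  have fin: "finite (\<Union>w\<in>W. H \<inter> (Dv w \<inter> S))" using finW finite_Dv by auto
  have "H \<inter> (Dv c \<inter> S) = (if c \<in> H then insert c (\<Union>w\<in>W. H \<inter> (Dv w \<inter> S)) else (\<Union>w\<in>W. H \<inter> (Dv w \<inter> S)))"
    using sp_dec by auto
  then show ?thesis using u cn fin by simp
qed

lemma sp_out: "dis E H \<Longrightarrow> c \<notin> H \<Longrightarrow> card (H \<inter> (Dv c \<inter> S)) \<le> (\<Sum>w\<in>W. fd (N w))"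
  using sp_card[of H] lpW unfolding legP_def by (auto intro: sum_mono)

definition ind :: nat where "ind = (if \<exists>w\<in>W. N w mod 3 = 1 then 1 else 0)"

lemma sp_in:
  assumes H: "dis E H" and cH: "c \<in> H"
  shows "card (H \<inter> (Dv c \<inter> S)) \<le> 1 + (\<Sum>w\<in>W. fd (N w - 1)) + ind"
proof -
  define k where "k w = card (H \<inter> (Dv w \<inter> S))" for w
  have uniq: "w1 = w2" if "w1 \<in> W \<inter> H" "w2 \<in> W \<inter> H" for w1 w2
    using dis_two[OF H cH, of w1 w2] that ch_props by auto
  have B2: "k w \<le> fd (N w - 1)" if "w \<in> W" "w \<notin> H" for w
    using lpW[OF that(1)] H that(2) unfolding legP_def k_def by auto
  have "(\<Sum>w\<in>W. k w) \<le> (\<Sum>w\<in>W. fd (N w - 1)) + ind"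
  proof (cases "W \<inter> H = {}")
    case True
    then have "(\<Sum>w\<in>W. k w) \<le> (\<Sum>w\<in>W. fd (N w - 1))" using B2 by (intro sum_mono) auto
    then show ?thesis by simp
  next
    case False
    then obtain j where j: "j \<in> W" "j \<in> H" by auto
    have pj: "par j = c" using j ch_props by auto
    have kj: "k j \<le> 1 + fd (N j - 2)" using lpW[OF j(1)] H j(2) cH pj unfolding legP_def k_def by auto
    have a7: "1 + fd (N j - 2) \<le> fd (N j - 1) + ind"
      using fd_a7[OF N1[OF j(1)]] j(1) unfolding ind_def by (auto split: if_splits)
    have rest: "(\<Sum>w\<in>W - {j}. k w) \<le> (\<Sum>w\<in>W - {j}. fd (N w - 1))"
      using B2 uniq j by (intro sum_mono) auto
    have "(\<Sum>w\<in>W. k w) = k j + (\<Sum>w\<in>W - {j}. k w)" using sum.remove[OF finW j(1)] .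
    moreover have "(\<Sum>w\<in>W. fd (N w - 1)) = fd (N j - 1) + (\<Sum>w\<in>W - {j}. fd (N w - 1))"
      using sum.remove[OF finW j(1)] .
    ultimately show ?thesis using kj a7 rest by linarith
  qed
  then show ?thesis using sp_card[of H] cH unfolding k_def by simp
qed

lemma sp_sum: "(\<Sum>w\<in>W. fd (N w)) = (\<Sum>w\<in>W. fd (N w - 1)) + card {w\<in>W. N w mod 3 \<noteq> 0}"
proof -
  have "(\<Sum>w\<in>W. fd (N w)) = (\<Sum>w\<in>W. fd (N w - 1) + (if N w mod 3 \<noteq> 0 then 1 else 0))"
    using fd_a8 N1 by (intro sum.cong) auto
  also have "\<dots> = (\<Sum>w\<in>W. fd (N w - 1)) + (\<Sum>w\<in>W. (if N w mod 3 \<noteq> 0 then 1 else 0))"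
    by (simp add: sum.distrib)
  also have "(\<Sum>w\<in>W. (if N w mod 3 \<noteq> 0 then 1 else 0)) = card {w\<in>W. N w mod 3 \<noteq> 0}"
    using sum.inter_filter[OF finW, of "\<lambda>_. 1::nat" "\<lambda>w. N w mod 3 \<noteq> 0"] by simp
  finally show ?thesis .
qed

lemma sp_Gout: "\<exists>G \<subseteq> Dv c \<inter> S. c \<notin> G \<and> dis E G \<and> card G = (\<Sum>w\<in>W. fd (N w))"
proof -
  have "\<forall>w\<in>W. \<exists>G. G \<subseteq> Dv w \<inter> S \<and> dis E G \<and> card G = fd (N w)"
    using lpW unfolding legP_def by blast
  then obtain g where gp: "\<forall>w\<in>W. g w \<subseteq> Dv w \<inter> S \<and> dis E (g w) \<and> card (g w) = fd (N w)"
    by metis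
  have h: "\<forall>w\<in>W. g w \<subseteq> Dv w \<and> dis E (g w)" using gp by auto
  show ?thesis
  proof (intro exI[of _ "\<Union>(g ` W)"] conjI)
    show "\<Union>(g ` W) \<subseteq> Dv c \<inter> S" using gp sp_dec by blast
    show "c \<notin> \<Union>(g ` W)" using fam_union(3)[of W c g] h by auto
    show "dis E (\<Union>(g ` W))" using fam_union(2)[of W c g] h by auto
    show "card (\<Union>(g ` W)) = (\<Sum>w\<in>W. fd (N w))" using fam_union(1)[of W c g] h gp by auto
  qed
qed

lemma sp_Gin: "\<exists>G \<subseteq> Dv c \<inter> S. c \<in> G \<and> dis E G \<and> card G = 1 + (\<Sum>w\<in>W. fd (N w - 1)) + ind"
proof -
  have "\<forall>w\<in>W. \<exists>G. G \<subseteq> Dv w \<inter> S \<and> w \<notin> G \<and> dis E G \<and> card G = fd (N w - 1)"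
    using lpW unfolding legP_def by blast
  then obtain g0 where g0: "\<forall>w\<in>W. g0 w \<subseteq> Dv w \<inter> S \<and> w \<notin> g0 w \<and> dis E (g0 w) \<and> card (g0 w) = fd (N w - 1)"
    by metis
  have "\<forall>w\<in>W. \<exists>G. G \<subseteq> Dv w \<inter> S \<and> w \<in> G \<and> dis E G \<and> (\<forall>z\<in>G. \<not> E w z) \<and> card G = 1 + fd (N w - 2)"
    using lpW unfolding legP_def by blast
  then obtain g2 where g2: "\<forall>w\<in>W. g2 w \<subseteq> Dv w \<inter> S \<and> w \<in> g2 w \<and> dis E (g2 w) \<and> (\<forall>z\<in>g2 w. \<not> E w z)
      \<and> card (g2 w) = 1 + fd (N w - 2)"
    by metis
  show ?thesis
  proof (cases "\<exists>w\<in>W. N w mod 3 = 1")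
    case False
    then have i0: "ind = 0" unfolding ind_def by auto
    have h: "\<forall>w\<in>W. g0 w \<subseteq> Dv w \<and> dis E (g0 w)" using g0 by auto
    show ?thesis
    proof (intro exI[of _ "insert c (\<Union>(g0 ` W))"] conjI)
      show "insert c (\<Union>(g0 ` W)) \<subseteq> Dv c \<inter> S" using g0 sp_dec by blast
      show "dis E (insert c (\<Union>(g0 ` W)))" using fam_union(4)[of W c g0] h g0 by auto
      have "card (\<Union>(g0 ` W)) = (\<Sum>w\<in>W. fd (N w - 1))" using fam_union(1)[of W c g0] h g0 by auto
      moreover have "c \<notin> \<Union>(g0 ` W)" using fam_union(3)[of W c g0] h by auto
      moreover have "finite (\<Union>(g0 ` W))" using finW g0 finite_Dv finite_subset by (metis finite_UN_I finite_Int)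
      ultimately show "card (insert c (\<Union>(g0 ` W))) = 1 + (\<Sum>w\<in>W. fd (N w - 1)) + ind" using i0 by simp
    qed simp
  next
    case True
    then obtain j where j: "j \<in> W" "N j mod 3 = 1" by auto
    then have i1: "ind = 1" unfolding ind_def by auto
    define hh where "hh w = (if w = j then g2 w else g0 w)" for w
    have h: "\<forall>w\<in>W. hh w \<subseteq> Dv w \<and> dis E (hh w)" using g0 g2 unfolding hh_def by auto
    have wh: "\<And>w. w \<in> W \<Longrightarrow> w \<in> hh w \<Longrightarrow> w = j" using g0 unfolding hh_def by (auto split: if_splits)
    have cardU: "card (\<Union>(hh ` W)) = (\<Sum>w\<in>W. card (hh w))" using fam_union(1)[of W c hh] h by auto
    have "(\<Sum>w\<in>W. card (hh w)) = card (hh j) + (\<Sum>w\<in>W - {j}. card (hh w))"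
      using sum.remove[OF finW j(1)] .
    also have "(\<Sum>w\<in>W - {j}. card (hh w)) = (\<Sum>w\<in>W - {j}. fd (N w - 1))"
      using g0 unfolding hh_def by (intro sum.cong) auto
    also have "card (hh j) = fd (N j - 1) + 1" using g2 j fd_a9[OF j(2)] unfolding hh_def by auto
    finally have "(\<Sum>w\<in>W. card (hh w)) = (\<Sum>w\<in>W. fd (N w - 1)) + 1"
      using sum.remove[OF finW j(1), of "\<lambda>w. fd (N w - 1)"] by simp
    show ?thesis
    proof (intro exI[of _ "insert c (\<Union>(hh ` W))"] conjI)
      have hs: "\<And>w. w \<in> W \<Longrightarrow> hh w \<subseteq> Dv w \<inter> S" using g0 g2 unfolding hh_def by auto
      show "insert c (\<Union>(hh ` W)) \<subseteq> Dv c \<inter> S"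
      proof
        fix y assume "y \<in> insert c (\<Union>(hh ` W))"
        then have "y = c \<or> (\<exists>w\<in>W. y \<in> Dv w \<inter> S)" using hs by blast
        then show "y \<in> Dv c \<inter> S" by (subst sp_dec) blast
      qed
      show "dis E (insert c (\<Union>(hh ` W)))"
      proof (rule fam_union(4)[of W c hh])
        show "\<forall>w\<in>W. w \<in> hh w \<longrightarrow> (\<forall>z\<in>hh w. \<not> E w z)"
        proof (rule ballI, rule impI)
          fix w assume "w \<in> W" "w \<in> hh w"
          then have wj: "w = j" by (rule wh)
          have "\<forall>z\<in>g2 j. \<not> E j z" using g2 j(1) by blast
          then show "\<forall>z\<in>hh w. \<not> E w z" unfolding hh_def using wj by simp
        qed
        show "\<forall>w1\<in>W. \<forall>w2\<in>W. w1 \<in> hh w1 \<longrightarrow> w2 \<in> hh w2 \<longrightarrow> w1 = w2" using wh by auto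
      qed (use h in auto)
      have "c \<notin> \<Union>(hh ` W)" using fam_union(3)[of W c hh] h by auto
      moreover have "finite (\<Union>(hh ` W))" using finW h finite_Dv finite_subset by (metis finite_UN_I)
      ultimately show "card (insert c (\<Union>(hh ` W))) = 1 + (\<Sum>w\<in>W. fd (N w - 1)) + ind"
        using i1 cardU \<open>(\<Sum>w\<in>W. card (hh w)) = (\<Sum>w\<in>W. fd (N w - 1)) + 1\<close> by simp
    qed simp
  qed
qed

end

end


context rtree begin

lemma ind_eq: assumes "good S" "c \<in> S" "\<forall>w\<in>ch c \<inter> S. leg S w"
  shows "ind S c = (if {w \<in> ch c \<inter> S. card (Dv w \<inter> S) mod 3 = 1} \<noteq> {} then 1 else 0)"
  using ind_def[OF assms] by auto

definition val :: "'a set \<Rightarrow> bool \<Rightarrow> nat" where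
  "val S b = Max {card F | F. F \<subseteq> S \<and> dis E F \<and> (v \<in> F \<longleftrightarrow> b)}"

lemma val_char:
  assumes "finite S" "v \<in> S"
  shows "(\<exists>F. F \<subseteq> S \<and> dis E F \<and> (v \<in> F \<longleftrightarrow> b) \<and> card F = val S b)
       \<and> (\<forall>F. F \<subseteq> S \<longrightarrow> dis E F \<longrightarrow> (v \<in> F \<longleftrightarrow> b) \<longrightarrow> card F \<le> val S b)"
proof -
  define K where "K = {card F | F. F \<subseteq> S \<and> dis E F \<and> (v \<in> F \<longleftrightarrow> b)}"
  have "K \<subseteq> {0..card S}" unfolding K_def using card_mono[OF assms(1)] by auto
  then have fK: "finite K" using finite_subset by blast
  have "K \<noteq> {}"
  proof (cases b)
    case True
    then have "card {v} \<in> K" unfolding K_def using assms dis_single by blast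
    then show ?thesis by auto
  next
    case False
    have "{} \<subseteq> S \<and> dis E {} \<and> (v \<in> {} \<longleftrightarrow> b)" using False dis_empty by auto
    then have "card ({}::'a set) \<in> K" unfolding K_def by blast
    then show ?thesis by auto
  qed
  then have "Max K \<in> K" using Max_in fK by blast
  moreover have "\<forall>x\<in>K. x \<le> Max K" using fK by auto
  ultimately have a: "Max K \<in> K" and bK: "\<forall>x\<in>K. x \<le> Max K" by auto
  have vS: "val S b = Max K" unfolding val_def K_def ..
  have "\<exists>F. Max K = card F \<and> F \<subseteq> S \<and> dis E F \<and> (v \<in> F \<longleftrightarrow> b)" using a unfolding K_def by simp
  then obtain F where F: "F \<subseteq> S" "dis E F" "(v \<in> F \<longleftrightarrow> b)" "card F = Max K" by metis
  have "card F' \<le> Max K" if "F' \<subseteq> S" "dis E F'" "(v \<in> F' \<longleftrightarrow> b)" for F'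
  proof -
    have "card F' \<in> K" unfolding K_def using that by blast
    then show ?thesis using bK by blast
  qed
  then show ?thesis using F unfolding vS by blast
qed

lemma val_eqI:
  assumes "finite S" "v \<in> S"
    and "\<exists>F. F \<subseteq> S \<and> dis E F \<and> (v \<in> F \<longleftrightarrow> b) \<and> card F = m"
    and "\<forall>F. F \<subseteq> S \<longrightarrow> dis E F \<longrightarrow> (v \<in> F \<longleftrightarrow> b) \<longrightarrow> card F \<le> m"
  shows "val S b = m"
proof -
  obtain F where F: "F \<subseteq> S" "dis E F" "(v \<in> F \<longleftrightarrow> b)" "card F = m" using assms(3) by blast
  obtain F' where F': "F' \<subseteq> S" "dis E F'" "(v \<in> F' \<longleftrightarrow> b)" "card F' = val S b"
    using val_char[OF assms(1,2), of b] by blast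
  have "m \<le> val S b" using val_char[OF assms(1,2), of b] F by metis
  moreover have "val S b \<le> m" using assms(4) F' by metis
  ultimately show ?thesis by simp
qed

lemma good_fin: "good S \<Longrightarrow> finite S" using finV unfolding good_def by (meson finite_subset)
lemma good_v: "good S \<Longrightarrow> v \<in> S" unfolding good_def by auto

lemma shift:
  assumes g: "good S" and g': "good (S - R)" and R: "R \<subseteq> S" "v \<notin> R"
    and G: "G \<subseteq> R" "dis E G" "card G = k"
    and bnd: "\<forall>H. dis E H \<longrightarrow> card (H \<inter> R) \<le> k"
    and ne: "\<forall>y\<in>G. \<forall>z\<in>S - R. \<not> E y z"
  shows "val S b = val (S - R) b + k"
proof (rule val_eqI[OF good_fin[OF g] good_v[OF g]])
  have fS: "finite S" using good_fin[OF g] .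
  obtain F' where F': "F' \<subseteq> S - R" "dis E F'" "(v \<in> F' \<longleftrightarrow> b)" "card F' = val (S - R) b"
    using val_char[OF good_fin[OF g'] good_v[OF g'], of b] by blast
  show "\<exists>F. F \<subseteq> S \<and> dis E F \<and> (v \<in> F \<longleftrightarrow> b) \<and> card F = val (S - R) b + k"
  proof (intro exI[of _ "F' \<union> G"] conjI)
    show "F' \<union> G \<subseteq> S" using F' G R by auto
    show "dis E (F' \<union> G)" unfolding dis_def
    proof
      fix y assume y: "y \<in> F' \<union> G"
      show "card {z \<in> F' \<union> G. E y z} \<le> 1"
      proof (cases "y \<in> G")
        case True
        then have "{z \<in> F' \<union> G. E y z} = {z \<in> G. E y z}" using ne F'(1) by auto
        then show ?thesis using G(2) True unfolding dis_def by simp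
      next
        case False
        then have yF: "y \<in> F'" using y by auto
        have "{z \<in> F' \<union> G. E y z} = {z \<in> F'. E y z}" using ne F'(1) yF symE by blast
        then show ?thesis using F'(2) yF unfolding dis_def by simp
      qed
    qed
    show "(v \<in> F' \<union> G) = b" using F'(3) G(1) R(2) by auto
    have "F' \<subseteq> S" using F'(1) by auto
    then have "finite F'" using fS by (rule finite_subset)
    moreover have "G \<subseteq> S" using G(1) R(1) by auto
    then have "finite G" using fS by (rule finite_subset)
    moreover have "F' \<inter> G = {}" using F'(1) G(1) by auto
    ultimately show "card (F' \<union> G) = val (S - R) b + k" using F'(4) G(3) card_Un_disjoint by metis
  qed
  show "\<forall>F. F \<subseteq> S \<longrightarrow> dis E F \<longrightarrow> (v \<in> F \<longleftrightarrow> b) \<longrightarrow> card F \<le> val (S - R) b + k"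
  proof (intro allI impI)
    fix F assume F: "F \<subseteq> S" "dis E F" "(v \<in> F \<longleftrightarrow> b)"
    have "F - R \<subseteq> S - R" using F by auto
    moreover have "dis E (F - R)" using dis_mono[OF F(2)] by auto
    moreover have "(v \<in> F - R \<longleftrightarrow> b)" using F(3) R(2) by auto
    ultimately have c1: "card (F - R) \<le> val (S - R) b"
      using val_char[OF good_fin[OF g'] good_v[OF g'], of b] by blast
    have c2: "card (F \<inter> R) \<le> k" using bnd F(2) by auto
    have fF: "finite F" using F(1) fS finite_subset by blast
    have "card F = card (F - R) + card (F \<inter> R)"
      using card_Int_Diff[OF fF, of R] by simp
    then show "card F \<le> val (S - R) b + k" using c1 c2 by linarith
  qed
qed

end


context rtree begin

lemma children_mod_eq: "good S \<Longrightarrow> u \<in> S \<Longrightarrow>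
  children_mod S E v i u = {w \<in> ch u \<inter> S. card (Dv w \<inter> S) mod 3 = i}"
  unfolding children_mod_def using good_children good_desc by auto

lemma shiftB: "good S \<Longrightarrow> good (S - R) \<Longrightarrow> R \<subseteq> S \<Longrightarrow> v \<notin> R \<Longrightarrow> G \<subseteq> R \<Longrightarrow> dis E G \<Longrightarrow>
   \<forall>H. dis E H \<longrightarrow> card (H \<inter> R) \<le> card G \<Longrightarrow> \<forall>y\<in>G. \<forall>z\<in>S - R. \<not> E y z \<Longrightarrow>
   \<exists>k. val S True = val (S - R) True + k \<and> val S False = val (S - R) False + k"
  using shift[of S R G "card G"] by blast

lemma step:
  assumes g: "good S" and st: "prune_step E v S S'"
  shows "good S' \<and> (\<exists>k. val S True = val S' True + k \<and> val S False = val S' False + k)"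
proof -
  obtain u where uS: "u \<in> S" and uv: "u \<noteq> v" and du: "deg S E u \<ge> 3"
    and mx: "\<forall>u'\<in>S. u' \<noteq> v \<and> deg S E u' \<ge> 3 \<longrightarrow> dist S E v u' \<le> dist S E v u"
    and IF: "if card (children_mod S E v 2 u) \<ge> 1 \<or> card (children_mod S E v 1 u) \<ge> 2
        then S' = S - desc S E v u
        else (\<exists>z\<in>children S E v u. (children_mod S E v 1 u \<noteq> {} \<longrightarrow> z \<in> children_mod S E v 1 u)
               \<and> S' = S - \<Union> (desc S E v ` (children S E v u - {z})))"
    using st unfolding prune_step_def by blast
  have uV: "u \<in> V" using uS g unfolding good_def by auto
  define W where "W = ch u \<inter> S"
  define C1 where "C1 = {w \<in> W. card (Dv w \<inter> S) mod 3 = 1}"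
  define C2 where "C2 = {w \<in> W. card (Dv w \<inter> S) mod 3 = 2}"
  have cm1: "children_mod S E v 1 u = C1" unfolding C1_def W_def using children_mod_eq[OF g uS] by simp
  have cm2: "children_mod S E v 2 u = C2" unfolding C2_def W_def using children_mod_eq[OF g uS] by simp
  have chu: "children S E v u = W" unfolding W_def using good_children[OF g uS] .
  have desc_eq: "\<And>x. desc S E v x = Dv x \<inter> S" using good_desc[OF g] .
  have finW: "finite W" unfolding W_def using finV unfolding ch_def by auto
  have legs: "\<forall>w\<in>ch u \<inter> S. leg S w"
  proof
    fix w assume w: "w \<in> ch u \<inter> S"
    have wv: "w \<noteq> v" using w unfolding ch_def by auto
    have "card (ch y \<inter> S) \<le> 1" if y: "y \<in> Dv w \<inter> S" for y
    proof (rule ccontr)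
      assume "\<not> card (ch y \<inter> S) \<le> 1"
      moreover have yv: "y \<noteq> v" using root_notin_Dv[OF wv] y by auto
      ultimately have "deg S E y \<ge> 3" using good_deg[OF g, of y] y by auto
      then have "dist S E v y \<le> dist S E v u" using mx y yv by auto
      then have "depth y \<le> depth u" using good_dist[OF g] y uS by simp
      moreover have "y \<in> Dv u" using ch_Dv_sub w y by auto
      moreover have "y \<noteq> u" using notin_ch_Dv w y by auto
      ultimately show False using Dv_depth by fastforce
    qed
    then show "leg S w" unfolding leg_def using w wv by auto
  qed
  have lpW: "\<And>w. w \<in> W \<Longrightarrow> legP S w (card (Dv w \<inter> S))" using leg_facts[OF g] legs unfolding W_def by auto
  show ?thesis
  proof (cases "card C2 \<ge> 1 \<or> card C1 \<ge> 2")
    case True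
    define R where "R = Dv u \<inter> S"
    have S': "S' = S - R" using IF True unfolding cm1 cm2 desc_eq R_def by auto
    have g': "good (S - R)"
    proof -
      have "good (S - (\<Union>w\<in>{u}. Dv w))" using good_diff[OF g, of "{u}"] uV uv by auto
      moreover have "S - (\<Union>w\<in>{u}. Dv w) = S - R" unfolding R_def by auto
      ultimately show ?thesis by simp
    qed
    obtain G where G: "G \<subseteq> R" "u \<notin> G" "dis E G" "card G = (\<Sum>w\<in>W. fd (card (Dv w \<inter> S)))"
      using sp_Gout[OF g uS legs] unfolding R_def W_def by blast
    have s_eq: "card {w\<in>W. card (Dv w \<inter> S) mod 3 \<noteq> 0} = card C1 + card C2"
    proof -
      have "{w\<in>W. card (Dv w \<inter> S) mod 3 \<noteq> 0} = C1 \<union> C2" unfolding C1_def C2_def by auto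
      moreover have "C1 \<inter> C2 = {}" unfolding C1_def C2_def by auto
      moreover have "finite C1" "finite C2" unfolding C1_def C2_def using finW by auto
      ultimately show ?thesis by (simp add: card_Un_disjoint)
    qed
    have indv: "ind S u = (if C1 \<noteq> {} then 1 else 0)" using ind_eq[OF g uS legs] unfolding C1_def W_def by simp
    have c1ne: "C1 \<noteq> {} \<Longrightarrow> card C1 \<ge> 1" unfolding C1_def using finW by (simp add: Suc_le_eq card_gt_0_iff)
    have arith: "1 + ind S u \<le> card C1 + card C2" using True indv c1ne by (auto split: if_splits)
    have bnd: "\<forall>H. dis E H \<longrightarrow> card (H \<inter> R) \<le> card G"
    proof (intro allI impI)
      fix H assume H: "dis E H"
      show "card (H \<inter> R) \<le> card G"
      proof (cases "u \<in> H")
        case False then show ?thesis using sp_out[OF g uS legs H] G(4) unfolding R_def W_def by simp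
      next
        case True
        have "card (H \<inter> R) \<le> 1 + (\<Sum>w\<in>W. fd (card (Dv w \<inter> S) - 1)) + ind S u"
          using sp_in[OF g uS legs H True] unfolding R_def W_def by simp
        also have "\<dots> \<le> (\<Sum>w\<in>W. fd (card (Dv w \<inter> S)))"
          using sp_sum[OF g uS legs] s_eq arith unfolding W_def by simp
        finally show ?thesis using G(4) by simp
      qed
    qed
    have ne: "\<forall>y\<in>G. \<forall>z\<in>S - R. \<not> E y z"
    proof (intro ballI notI)
      fix y z assume y: "y \<in> G" and z: "z \<in> S - R" and e: "E y z"
      have "y \<in> Dv u" "z \<notin> Dv u" using y z G(1) unfolding R_def by auto
      then have "y = u" using cross e by blast
      then show False using y G(2) by simp
    qed
    have "R \<subseteq> S" "v \<notin> R" unfolding R_def using root_notin_Dv[OF uv] by auto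
    then show ?thesis using shiftB[OF g g' _ _ G(1) G(3) bnd ne] g' S' by simp
  next
    case False
    then obtain z where zW: "z \<in> W" and zC: "C1 \<noteq> {} \<longrightarrow> z \<in> C1"
      and S'0: "S' = S - \<Union> (desc S E v ` (W - {z}))"
      using IF unfolding cm1 cm2 chu by auto
    define W' where "W' = W - {z}"
    define R where "R = (\<Union>w\<in>W'. Dv w \<inter> S)"
    have S': "S' = S - R" unfolding S'0 R_def W'_def desc_eq by simp
    have W'ch: "W' \<subseteq> ch u" unfolding W'_def W_def by auto
    have W'V: "W' \<subseteq> V - {v}" using W'ch unfolding ch_def by auto
    have g': "good (S - R)"
    proof -
      have "S - (\<Union>w\<in>W'. Dv w) = S - R" unfolding R_def by auto
      then show ?thesis using good_diff[OF g W'V] by simp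
    qed
    have "finite C2" unfolding C2_def using finW by simp
    moreover have "card C2 = 0" using False by simp
    ultimately have C2e: "C2 = {}" by simp
    have C1z: "C1 \<subseteq> {z}"
    proof
      fix w assume w: "w \<in> C1"
      have "card C1 \<le> 1" using False by simp
      moreover have "finite C1" unfolding C1_def using finW by simp
      moreover have "z \<in> C1" using zC w by auto
      ultimately show "w \<in> {z}" using w by (auto simp: card_le_Suc0_iff_eq)
    qed
    have mod0: "\<And>w. w \<in> W' \<Longrightarrow> card (Dv w \<inter> S) mod 3 = 0"
    proof -
      fix w assume w: "w \<in> W'"
      have "card (Dv w \<inter> S) mod 3 \<noteq> 1" using w C1z unfolding C1_def W'_def by auto
      moreover have "card (Dv w \<inter> S) mod 3 \<noteq> 2" using w C2e unfolding C2_def W'_def by auto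
      moreover have "card (Dv w \<inter> S) mod 3 < 3" by simp
      ultimately show "card (Dv w \<inter> S) mod 3 = 0" by linarith
    qed
    have lpW': "\<And>w. w \<in> W' \<Longrightarrow> legP S w (card (Dv w \<inter> S))" using lpW unfolding W'_def by auto
    have "\<forall>w\<in>W'. \<exists>G. G \<subseteq> Dv w \<inter> S \<and> w \<notin> G \<and> dis E G \<and> card G = fd (card (Dv w \<inter> S) - 1)"
      using lpW' unfolding legP_def by blast
    then obtain g0 where g0: "\<forall>w\<in>W'. g0 w \<subseteq> Dv w \<inter> S \<and> w \<notin> g0 w \<and> dis E (g0 w)
        \<and> card (g0 w) = fd (card (Dv w \<inter> S) - 1)"
      by metis
    have h: "\<forall>w\<in>W'. g0 w \<subseteq> Dv w \<and> dis E (g0 w)" using g0 by auto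
    define G where "G = \<Union>(g0 ` W')"
    have finW': "finite W'" using finW unfolding W'_def by auto
    have cardG: "card G = (\<Sum>w\<in>W'. fd (card (Dv w \<inter> S)))"
    proof -
      have "card G = (\<Sum>w\<in>W'. card (g0 w))" unfolding G_def using fam_union(1)[OF W'ch h] .
      also have "\<dots> = (\<Sum>w\<in>W'. fd (card (Dv w \<inter> S)))"
        using g0 mod0 fd_a4 by (intro sum.cong) auto
      finally show ?thesis .
    qed
    have disG: "dis E G" unfolding G_def using fam_union(2)[OF W'ch h] .
    have GR: "G \<subseteq> R" unfolding G_def R_def using g0 by blast
    have bnd: "\<forall>H. dis E H \<longrightarrow> card (H \<inter> R) \<le> card G"
    proof (intro allI impI)
      fix H assume H: "dis E H"
      have "card (H \<inter> R) = card (\<Union>w\<in>W'. H \<inter> (Dv w \<inter> S))" unfolding R_def by (simp add: Int_UN_distrib)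
      also have "\<dots> = (\<Sum>w\<in>W'. card (H \<inter> (Dv w \<inter> S)))"
      proof (rule card_UN_disjoint[OF finW'])
        show "\<forall>i\<in>W'. finite (H \<inter> (Dv i \<inter> S))" using finite_Dv by auto
        show "\<forall>i\<in>W'. \<forall>j\<in>W'. i \<noteq> j \<longrightarrow> H \<inter> (Dv i \<inter> S) \<inter> (H \<inter> (Dv j \<inter> S)) = {}"
          using ch_disj W'ch by blast
      qed
      also have "\<dots> \<le> (\<Sum>w\<in>W'. fd (card (Dv w \<inter> S)))"
        using lpW' H unfolding legP_def by (intro sum_mono) auto
      finally show "card (H \<inter> R) \<le> card G" using cardG by simp
    qed
    have ne: "\<forall>y\<in>G. \<forall>z\<in>S - R. \<not> E y z"
    proof (intro ballI notI)
      fix y z' assume y: "y \<in> G" and z': "z' \<in> S - R" and e: "E y z'"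
      obtain w where w: "w \<in> W'" "y \<in> g0 w" using y unfolding G_def by auto
      have "y \<in> Dv w" using g0 w by auto
      moreover have "z' \<notin> Dv w" using z' w unfolding R_def by auto
      ultimately have "y = w" using cross e by blast
      then show False using g0 w by auto
    qed
    have "R \<subseteq> S" unfolding R_def by auto
    moreover have "v \<notin> R" unfolding R_def using root_notin_Dv W'V by auto
    ultimately show ?thesis using shiftB[OF g g' _ _ GR disG bnd ne] g' S' by simp
  qed
qed

end


context rtree begin

lemmas pstep = step

lemma steps:
  assumes "(prune_step E v)\<^sup>*\<^sup>* V S"
  shows "good S \<and> int (val S True) - int (val S False) = int (val V True) - int (val V False)"
  using assms
proof (induction rule: rtranclp_induct)
  case base then show ?case using good_V by simp
next
  case (step S1 S2)
  then have g1: "good S1" by simp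
  obtain k where k: "val S1 True = val S2 True + k" "val S1 False = val S2 False + k"
    using pstep[OF g1 step.hyps(2)] by blast
  have "good S2" using pstep[OF g1 step.hyps(2)] by blast
  then show ?case using step.IH k by simp
qed

lemma final_vals:
  assumes g: "good S" and nb: "\<not> (\<exists>u\<in>S. u \<noteq> v \<and> deg S E u \<ge> 3)"
  shows "int (val S True) - int (val S False) =
    1 + int (ind S v) - int (card {w \<in> ch v \<inter> S. card (Dv w \<inter> S) mod 3 = 1}
                          + card {w \<in> ch v \<inter> S. card (Dv w \<inter> S) mod 3 = 2})"
proof -
  have vS: "v \<in> S" using g unfolding good_def by auto
  have legs: "\<forall>w\<in>ch v \<inter> S. leg S w"
  proof
    fix w assume w: "w \<in> ch v \<inter> S"
    have wv: "w \<noteq> v" using w unfolding ch_def by auto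
    have "card (ch y \<inter> S) \<le> 1" if y: "y \<in> Dv w \<inter> S" for y
    proof -
      have yv: "y \<noteq> v" using root_notin_Dv[OF wv] y by auto
      then have "\<not> deg S E y \<ge> 3" using nb y by auto
      then show ?thesis using good_deg[OF g, of y] y yv by auto
    qed
    then show "leg S w" unfolding leg_def using w wv by auto
  qed
  have DS: "Dv v \<inter> S = S" using Dv_root g unfolding good_def by auto
  define W where "W = ch v \<inter> S"
  define C1 where "C1 = {w \<in> W. card (Dv w \<inter> S) mod 3 = 1}"
  define C2 where "C2 = {w \<in> W. card (Dv w \<inter> S) mod 3 = 2}"
  have finW: "finite W" unfolding W_def using finV unfolding ch_def by auto
  have fS: "finite S" using good_fin[OF g] .
  have vF: "val S False = (\<Sum>w\<in>W. fd (card (Dv w \<inter> S)))"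
  proof (rule val_eqI[OF fS vS])
    show "\<exists>F. F \<subseteq> S \<and> dis E F \<and> (v \<in> F \<longleftrightarrow> False) \<and> card F = (\<Sum>w\<in>W. fd (card (Dv w \<inter> S)))"
      using sp_Gout[OF g vS legs] DS unfolding W_def by auto
    show "\<forall>F. F \<subseteq> S \<longrightarrow> dis E F \<longrightarrow> (v \<in> F \<longleftrightarrow> False) \<longrightarrow> card F \<le> (\<Sum>w\<in>W. fd (card (Dv w \<inter> S)))"
    proof (intro allI impI)
      fix F assume F: "F \<subseteq> S" "dis E F" "(v \<in> F \<longleftrightarrow> False)"
      have "F \<inter> (Dv v \<inter> S) = F" using F DS by auto
      then show "card F \<le> (\<Sum>w\<in>W. fd (card (Dv w \<inter> S)))"
        using sp_out[OF g vS legs F(2)] F(3) unfolding W_def by simp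
    qed
  qed
  have vT: "val S True = 1 + (\<Sum>w\<in>W. fd (card (Dv w \<inter> S) - 1)) + ind S v"
  proof (rule val_eqI[OF fS vS])
    show "\<exists>F. F \<subseteq> S \<and> dis E F \<and> (v \<in> F \<longleftrightarrow> True) \<and> card F = 1 + (\<Sum>w\<in>W. fd (card (Dv w \<inter> S) - 1)) + ind S v"
      using sp_Gin[OF g vS legs] DS unfolding W_def by auto
    show "\<forall>F. F \<subseteq> S \<longrightarrow> dis E F \<longrightarrow> (v \<in> F \<longleftrightarrow> True) \<longrightarrow> card F \<le> 1 + (\<Sum>w\<in>W. fd (card (Dv w \<inter> S) - 1)) + ind S v"
    proof (intro allI impI)
      fix F assume F: "F \<subseteq> S" "dis E F" "(v \<in> F \<longleftrightarrow> True)"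
      have "F \<inter> (Dv v \<inter> S) = F" using F DS by auto
      then show "card F \<le> 1 + (\<Sum>w\<in>W. fd (card (Dv w \<inter> S) - 1)) + ind S v"
        using sp_in[OF g vS legs F(2)] F(3) unfolding W_def by simp
    qed
  qed
  have s_eq: "card {w\<in>W. card (Dv w \<inter> S) mod 3 \<noteq> 0} = card C1 + card C2"
  proof -
    have "{w\<in>W. card (Dv w \<inter> S) mod 3 \<noteq> 0} = C1 \<union> C2" unfolding C1_def C2_def by auto
    moreover have "C1 \<inter> C2 = {}" unfolding C1_def C2_def by auto
    moreover have "finite C1" "finite C2" unfolding C1_def C2_def using finW by auto
    ultimately show ?thesis by (simp add: card_Un_disjoint)
  qed
  have "(\<Sum>w\<in>W. fd (card (Dv w \<inter> S))) = (\<Sum>w\<in>W. fd (card (Dv w \<inter> S) - 1)) + (card C1 + card C2)"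
    using sp_sum[OF g vS legs] s_eq unfolding W_def by simp
  then show ?thesis using vF vT unfolding C1_def C2_def W_def by simp
qed

lemma dissoc_iff: "dissociation_set V E F \<longleftrightarrow> F \<subseteq> V \<and> dis E F"
  unfolding dissociation_set_def dis_def by auto

lemma A_N_iff:
  shows "(v \<in> A_set V E \<longleftrightarrow> val V False < val V True) \<and> (v \<in> N_set V E \<longleftrightarrow> val V True < val V False)"
proof -
  have fV: "finite V" using finV .
  obtain FT where FT: "FT \<subseteq> V" "dis E FT" "v \<in> FT" "card FT = val V True"
    using val_char[OF fV root, of True] by blast
  obtain FF where FF: "FF \<subseteq> V" "dis E FF" "v \<notin> FF" "card FF = val V False"
    using val_char[OF fV root, of False] by blast
  have bndT: "\<And>F. F \<subseteq> V \<Longrightarrow> dis E F \<Longrightarrow> v \<in> F \<Longrightarrow> card F \<le> val V True"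
    using val_char[OF fV root, of True] by blast
  have bndF: "\<And>F. F \<subseteq> V \<Longrightarrow> dis E F \<Longrightarrow> v \<notin> F \<Longrightarrow> card F \<le> val V False"
    using val_char[OF fV root, of False] by blast
  have A: "v \<in> A_set V E \<longleftrightarrow> val V False < val V True"
  proof
    assume vA: "v \<in> A_set V E"
    show "val V False < val V True"
    proof (rule ccontr)
      assume "\<not> val V False < val V True"
      then have "max_dissociation_set V E FF"
        unfolding max_dissociation_set_def dissoc_iff using FF bndT bndF
        by (metis le_trans not_less nat_le_linear)
      then show False using vA FF(3) unfolding A_set_def by auto
    qed
  next
    assume lt: "val V False < val V True"
    show "v \<in> A_set V E" unfolding A_set_def
    proof (intro CollectI conjI allI impI)
      fix F assume F: "max_dissociation_set V E F"
      then have "card FT \<le> card F" "F \<subseteq> V" "dis E F"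
        using FT unfolding max_dissociation_set_def dissoc_iff by auto
      then show "v \<in> F"
      proof (intro ccontr[of "v \<in> F"])
        assume a: "card FT \<le> card F" "F \<subseteq> V" "dis E F" "v \<notin> F"
        have "card F \<le> val V False" using bndF[OF a(2,3,4)] .
        then show False using a(1) lt FT(4) by linarith
      qed
    qed (rule root)
  qed
  have N: "v \<in> N_set V E \<longleftrightarrow> val V True < val V False"
  proof
    assume vN: "v \<in> N_set V E"
    show "val V True < val V False"
    proof (rule ccontr)
      assume "\<not> val V True < val V False"
      then have "max_dissociation_set V E FT"
        unfolding max_dissociation_set_def dissoc_iff using FT bndT bndF
        by (metis le_trans not_less nat_le_linear)
      then show False using vN FT(3) unfolding N_set_def by auto
    qed
  next
    assume lt: "val V True < val V False"
    show "v \<in> N_set V E" unfolding N_set_def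
    proof (intro CollectI conjI allI impI)
      fix F assume F: "max_dissociation_set V E F"
      then have "card FF \<le> card F" "F \<subseteq> V" "dis E F"
        using FF unfolding max_dissociation_set_def dissoc_iff by auto
      then show "v \<notin> F"
      proof (intro notI)
        assume a: "card FF \<le> card F" "F \<subseteq> V" "dis E F" "v \<in> F"
        have "card F \<le> val V True" using bndT[OF a(2,3,4)] .
        then show False using a(1) lt FF(4) by linarith
      qed
    qed (rule root)
  qed
  show ?thesis using A N by blast
qed

end

lemma final_arith:
  fixes c1 c2 :: nat and d :: int
  assumes "d = 1 + (if c1 \<ge> 1 then 1 else 0) - int (c1 + c2)"
  shows "(0 < d \<longleftrightarrow> c2 = 0 \<and> c1 \<le> 1) \<and> (d < 0 \<longleftrightarrow> c2 = 2 \<or> c1 + c2 \<ge> 3)"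
  using assms by auto

theorem theorem3p1:
  fixes V :: "'a set" and E :: "'a \<Rightarrow> 'a \<Rightarrow> bool" and v :: 'a and S :: "'a set"
  assumes "is_tree V E" and "v \<in> V" and "is_pruning V E v S"
  shows "(v \<in> A_set V E \<longleftrightarrow>
            card (children_mod S E v 2 v) = 0 \<and> card (children_mod S E v 1 v) \<le> 1)
       \<and> (v \<in> N_set V E \<longleftrightarrow>
            card (children_mod S E v 2 v) = 2
            \<or> card (children_mod S E v 1 v) + card (children_mod S E v 2 v) \<ge> 3)"
proof -
  interpret rtree V E v using assms(1,2) by unfold_locales
  have rt: "(prune_step E v)\<^sup>*\<^sup>* V S" and nb: "\<not> (\<exists>u\<in>S. u \<noteq> v \<and> deg S E u \<ge> 3)"
    using assms(3) unfolding is_pruning_def by auto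
  have gS: "good S" and dd: "int (val S True) - int (val S False) = int (val V True) - int (val V False)"
    using steps[OF rt] by auto
  have vS: "v \<in> S" using gS unfolding good_def by auto
  define C1 where "C1 = children_mod S E v 1 v"
  define C2 where "C2 = children_mod S E v 2 v"
  have C1e: "C1 = {w \<in> ch v \<inter> S. card (Dv w \<inter> S) mod 3 = 1}" unfolding C1_def using children_mod_eq[OF gS vS] .
  have C2e: "C2 = {w \<in> ch v \<inter> S. card (Dv w \<inter> S) mod 3 = 2}" unfolding C2_def using children_mod_eq[OF gS vS] .
  have legs: "\<forall>w\<in>ch v \<inter> S. leg S w"
  proof
    fix w assume w: "w \<in> ch v \<inter> S"
    have wv: "w \<noteq> v" using w unfolding ch_def by auto
    have "card (ch y \<inter> S) \<le> 1" if y: "y \<in> Dv w \<inter> S" for y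
    proof -
      have yv: "y \<noteq> v" using root_notin_Dv[OF wv] y by auto
      then have "\<not> deg S E y \<ge> 3" using nb y by auto
      then show ?thesis using good_deg[OF gS, of y] y yv by auto
    qed
    then show "leg S w" unfolding leg_def using w wv by auto
  qed
  have finC1: "finite C1" unfolding C1e using finV unfolding ch_def by auto
  have ind: "ind S v = (if card C1 \<ge> 1 then 1 else 0)"
    using ind_eq[OF gS vS legs] finC1 unfolding C1e[symmetric] by (auto simp: Suc_le_eq card_gt_0_iff)
  have d: "int (val V True) - int (val V False) = 1 + (if card C1 \<ge> 1 then 1 else 0) - int (card C1 + card C2)"
    using final_vals[OF gS nb] dd ind unfolding C1e C2e by simp
  have AN: "(v \<in> A_set V E \<longleftrightarrow> val V False < val V True) \<and> (v \<in> N_set V E \<longleftrightarrow> val V True < val V False)"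
    using A_N_iff .
  have ar: "(0 < int (val V True) - int (val V False) \<longleftrightarrow> card C2 = 0 \<and> card C1 \<le> 1)
      \<and> (int (val V True) - int (val V False) < 0 \<longleftrightarrow> card C2 = 2 \<or> card C1 + card C2 \<ge> 3)"
    using final_arith[OF d] .
  show ?thesis using AN ar unfolding C1_def C2_def by linarith
qed


end
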